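(* A smooth cubic surface over $\mathbb{Q}$ that does not contain three pairwise disjoint lines defined over $\mathbb{Q}$ cannot contain exactly four lines defined over $\mathbb{Q}$.
   Context: A line on the surface is defined over $\mathbb{Q}$ if it is cut out by linear forms with rational coefficients and is contained in the surface. *)

theory Defs
  imports Complex_Main
begin

text \<open>Homogeneous coordinates of P^3 are represented by functions nat => field,
  only the coordinates 0,1,2,3 being relevant.  A cubic form in x0..x3 with
  rational coefficients is given by its coefficient function on exponent
  vectors (a,b,c,d) with a+b+c+d = 3.\<close>

type_synonym cubic_form = "nat \<times> nat \<times> nat \<times> nat \<Rightarrow> rat"

definition monos3 :: "(nat \<times> nat \<times> nat \<times> nat) set" where
  "monos3 = {(a,b,c,d). a + b + c + d = 3}"

definition expo :: "nat \<times> nat \<times> nat \<times> nat \<Rightarrow> nat \<Rightarrow> nat" where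
  "expo m k = (case m of (a,b,c,d) \<Rightarrow> [a,b,c,d] ! k)"

definition cubic_eval :: "cubic_form \<Rightarrow> (nat \<Rightarrow> complex) \<Rightarrow> complex" where
  "cubic_eval F x = (\<Sum>m\<in>monos3. of_rat (F m) * (\<Prod>k<4. x k ^ expo m k))"

definition cubic_partial :: "cubic_form \<Rightarrow> nat \<Rightarrow> (nat \<Rightarrow> complex) \<Rightarrow> complex" where
  "cubic_partial F j x = (\<Sum>m\<in>monos3. of_rat (F m) * of_nat (expo m j) *
      (\<Prod>k<4. x k ^ (if k = j then expo m k - 1 else expo m k)))"

text \<open>Smooth cubic surface: no point of P^3 over the algebraically closed field C
  (equivalently over the algebraic closure of Q) lies on the surface and is singular.\<close>
definition smooth_cubic :: "cubic_form \<Rightarrow> bool" where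
  "smooth_cubic F \<longleftrightarrow>
     \<not> (\<exists>x. (\<exists>i<4. x i \<noteq> 0) \<and> cubic_eval F x = 0 \<and> (\<forall>j<4. cubic_partial F j x = 0))"

definition Q4 :: "(nat \<Rightarrow> rat) set" where
  "Q4 = {v. \<forall>i\<ge>4. v i = 0}"

text \<open>A line of P^3 defined over Q = a 2-dimensional Q-linear subspace of Q^4,
  given as the Q-span of two linearly independent rational vectors.\<close>
definition qline :: "(nat \<Rightarrow> rat) set \<Rightarrow> bool" where
  "qline L \<longleftrightarrow> (\<exists>p q. p \<in> Q4 \<and> q \<in> Q4 \<and>
      (\<forall>s t. (\<lambda>i. s * p i + t * q i) = (\<lambda>i. 0) \<longrightarrow> s = 0 \<and> t = 0) \<and>
      L = {(\<lambda>i. s * p i + t * q i) | s t. True})"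

text \<open>The complex points (affine cone) of a rational linear subspace.\<close>
definition cspan :: "(nat \<Rightarrow> rat) set \<Rightarrow> (nat \<Rightarrow> complex) set" where
  "cspan L = {(\<lambda>i. s * of_rat (p i) + t * of_rat (q i)) | s t p q. p \<in> L \<and> q \<in> L}"

definition line_on_surface :: "cubic_form \<Rightarrow> (nat \<Rightarrow> rat) set \<Rightarrow> bool" where
  "line_on_surface F L \<longleftrightarrow> (\<forall>w\<in>cspan L. cubic_eval F w = 0)"

text \<open>Two lines are disjoint (as subvarieties of P^3 over C) iff their cones meet only in 0.\<close>
definition lines_disjoint :: "(nat \<Rightarrow> rat) set \<Rightarrow> (nat \<Rightarrow> rat) set \<Rightarrow> bool" where
  "lines_disjoint L1 L2 \<longleftrightarrow> cspan L1 \<inter> cspan L2 \<subseteq> {\<lambda>i. 0}"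

definition rational_lines :: "cubic_form \<Rightarrow> (nat \<Rightarrow> rat) set set" where
  "rational_lines F = {L. qline L \<and> line_on_surface F L}"

end

theory Submission
  imports Defs "Jordan_Normal_Form.Determinant"
begin
definition S20 :: "(nat \<times> nat \<times> nat \<times> nat) set" where "S20 = {(3,0,0,0),(0,3,0,0),(0,0,3,0),(0,0,0,3),
 (2,1,0,0),(2,0,1,0),(2,0,0,1),(1,2,0,0),(0,2,1,0),(0,2,0,1),
 (1,0,2,0),(0,1,2,0),(0,0,2,1),(1,0,0,2),(0,1,0,2),(0,0,1,2),
 (1,1,1,0),(1,1,0,1),(1,0,1,1),(0,1,1,1)}"
lemma l4: "(x::nat) < 4 \<Longrightarrow> x = 0 \<or> x = 1 \<or> x = 2 \<or> x = 3" by auto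
lemma monos3_S20: "monos3 = S20"
proof -
  have H: "a + b + c + d = (3::nat) \<Longrightarrow> (a,b,c,d) \<in> S20" for a b c d
  proof -
    assume h: "a+b+c+d = 3"
    hence d: "d = 3 - a - b - c" and "a < 4" "b < 4" "c < 4" by auto
    from l4[OF \<open>a<4\<close>] l4[OF \<open>b<4\<close>] l4[OF \<open>c<4\<close>] h d show ?thesis
      unfolding S20_def by (elim disjE; simp)
  qed
  have "S20 \<subseteq> monos3" unfolding monos3_def S20_def by simp
  moreover have "monos3 \<subseteq> S20" unfolding monos3_def using H by auto
  ultimately show ?thesis by blast
qed
lemmas monos3_eq = monos3_S20[unfolded S20_def]

definition idx :: "nat \<times> nat \<times> nat \<times> nat \<Rightarrow> nat list" where
  "idx m = (case m of (a,b,c,d) \<Rightarrow> replicate a 0 @ replicate b 1 @ replicate c 2 @ replicate d 3)"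

definition trm :: "nat \<times> nat \<times> nat \<times> nat \<Rightarrow> (nat \<Rightarrow> 'a::field_char_0) \<Rightarrow> (nat \<Rightarrow> 'a) \<Rightarrow> (nat \<Rightarrow> 'a) \<Rightarrow> 'a" where
  "trm m x y z = (let i = idx m ! 0; j = idx m ! 1; k = idx m ! 2 in
     (x i*y j*z k + x i*y k*z j + x j*y i*z k + x j*y k*z i + x k*y i*z j + x k*y j*z i)/6)"

definition tri :: "cubic_form \<Rightarrow> (nat \<Rightarrow> 'a::field_char_0) \<Rightarrow> (nat \<Rightarrow> 'a) \<Rightarrow> (nat \<Rightarrow> 'a) \<Rightarrow> 'a" where
  "tri F x y z = (\<Sum>m\<in>monos3. of_rat (F m) * trm m x y z)"

lemma tri_sym1: "tri F x y z = tri F y x z"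
  unfolding tri_def trm_def Let_def by (intro sum.cong refl) (simp add: algebra_simps)
lemma tri_sym2: "tri F x y z = tri F x z y"
  unfolding tri_def trm_def Let_def by (intro sum.cong refl) (simp add: algebra_simps)

lemma tri_add1: "tri F (\<lambda>i. x i + x' i) y z = tri F x y z + tri F x' y z"
  unfolding tri_def trm_def Let_def sum.distrib[symmetric]
  by (intro sum.cong refl) (simp add: field_simps)
lemma tri_smult1: "tri F (\<lambda>i. a * x i) y z = a * tri F x y z"
  unfolding tri_def trm_def Let_def sum_distrib_left
  by (intro sum.cong refl) (simp add: field_simps)
lemma tri_add2: "tri F y (\<lambda>i. x i + x' i) z = tri F y x z + tri F y x' z"
  using tri_add1 tri_sym1 by metis
lemma tri_smult2: "tri F y (\<lambda>i. a * x i) z = a * tri F y x z"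
  using tri_smult1 tri_sym1 by metis
lemma tri_add3: "tri F y z (\<lambda>i. x i + x' i) = tri F y z x + tri F y z x'"
  using tri_add2 tri_sym2 by metis
lemma tri_smult3: "tri F y z (\<lambda>i. a * x i) = a * tri F y z x"
  using tri_smult2 tri_sym2 by metis

lemma prod4: "(\<Prod>k<(4::nat). f k) = f 0 * f 1 * f 2 * (f 3 :: 'a::comm_monoid_mult)"
  by (simp add: eval_nat_numeral)

lemma eval_mono: assumes "m \<in> monos3"
  shows "(\<Prod>k<4. x k ^ expo m k) = trm m x x (x::nat\<Rightarrow>complex)"
proof -
  from assms[unfolded monos3_S20 S20_def] show ?thesis
    unfolding prod4 trm_def Let_def
    by (elim insertE emptyE; simp add: idx_def expo_def eval_nat_numeral algebra_simps)
qed

lemma eval_tri: "cubic_eval F x = tri F x x x"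
  unfolding cubic_eval_def tri_def
  by (intro sum.cong refl) (simp add: eval_mono)

lemma partial_mono: assumes "m \<in> monos3" "j < 4"
  shows "of_nat (expo m j) * (\<Prod>k<4. x k ^ (if k = j then expo m k - 1 else expo m k)) = 3 * trm m x x (\<lambda>i. if i = j then 1 else (0::complex))"
proof -
  from l4[OF assms(2)] assms(1)[unfolded monos3_S20 S20_def] show ?thesis
    unfolding prod4 trm_def Let_def
    by (elim disjE insertE emptyE; simp add: idx_def expo_def eval_nat_numeral algebra_simps)
qed

lemma partial_tri: "j < 4 \<Longrightarrow> cubic_partial F j x = 3 * tri F x x (\<lambda>i. if i = j then 1 else 0)"
  unfolding cubic_partial_def tri_def sum_distrib_left
  by (intro sum.cong refl) (simp add: partial_mono[symmetric] algebra_simps)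

lemma idx_lt4: "m \<in> monos3 \<Longrightarrow> k < 3 \<Longrightarrow> idx m ! k < 4"
  unfolding monos3_S20 S20_def idx_def
  by (elim insertE emptyE; auto simp: eval_nat_numeral less_Suc_eq)

lemma tri_rat: "tri F (\<lambda>i. of_rat (x i)) (\<lambda>i. of_rat (y i)) (\<lambda>i. of_rat (z i)) = (of_rat (tri F x y z) :: 'a::field_char_0)"
  unfolding tri_def trm_def Let_def by (simp add: of_rat_sum of_rat_mult of_rat_add of_rat_divide)

definition det4 :: "(nat \<Rightarrow> nat \<Rightarrow> 'a::field) \<Rightarrow> 'a" where
  "det4 c = det (mat 4 4 (\<lambda>(i,j). c j i))"

lemma mv4: "(mat 4 4 (\<lambda>(i,j). c j i) *\<^sub>v vec 4 s) $ i = (\<Sum>j<4. s j * (c j i :: 'a::field))" if "i < 4"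
  using that unfolding mult_mat_vec_def scalar_prod_def
  by (auto simp: atLeast0LessThan mult.commute intro!: sum.cong)

lemma K3: "det4 (\<lambda>j i. of_rat (c j i)) = (of_rat (det4 c) :: 'a :: field_char_0)"
proof -
  have "map_mat of_rat (mat 4 4 (\<lambda>(i,j). c j i)) = (mat 4 4 (\<lambda>(i,j). of_rat (c j i)) :: 'a mat)"
    by (auto simp: eq_matI)
  thus ?thesis unfolding det4_def by (metis of_rat_hom.hom_det)
qed

lemma K1: "det4 c = 0 \<longleftrightarrow> (\<exists>s. (\<exists>j<4. s j \<noteq> 0) \<and> (\<forall>i<4. (\<Sum>j<4. s j * c j i) = 0))"
  (is "?l \<longleftrightarrow> ?r")
proof
  assume ?l
  then obtain v where v: "v \<in> carrier_vec 4" "v \<noteq> 0\<^sub>v 4" "mat 4 4 (\<lambda>(i,j). c j i) *\<^sub>v v = 0\<^sub>v 4"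
    unfolding det4_def using det_0_iff_vec_prod_zero_field[of "mat 4 4 (\<lambda>(i,j). c j i)" 4] by auto
  have vv: "v = vec 4 (\<lambda>j. v $ j)" using v(1) by auto
  have "\<exists>j<4. v $ j \<noteq> 0" using v(1,2) by (auto simp: vec_eq_iff)
  moreover have "\<forall>i<4. (\<Sum>j<4. v $ j * c j i) = 0"
  proof (intro allI impI)
    fix i :: nat assume i: "i < 4"
    have "(mat 4 4 (\<lambda>(i,j). c j i) *\<^sub>v vec 4 (\<lambda>j. v $ j)) $ i = 0"
      using v(3) vv i by (metis index_zero_vec(1))
    thus "(\<Sum>j<4. v $ j * c j i) = 0" by (metis mv4[OF i])
  qed
  ultimately show ?r by blast
next
  assume ?r
  then obtain s where s: "\<exists>j<4. s j \<noteq> 0" "\<forall>i<4. (\<Sum>j<4. s j * c j i) = 0" by blast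
  have "vec 4 s \<noteq> 0\<^sub>v 4" using s(1) by (auto simp: vec_eq_iff)
  moreover have "mat 4 4 (\<lambda>(i,j). c j i) *\<^sub>v vec 4 s = 0\<^sub>v 4"
  proof (rule eq_vecI)
    fix i assume "i < dim_vec (0\<^sub>v 4 :: 'a vec)"
    hence i: "i < 4" by simp
    show "(mat 4 4 (\<lambda>(i,j). c j i) *\<^sub>v vec 4 s) $ i = 0\<^sub>v 4 $ i"
      using mv4[OF i, of c s] s(2) i by simp
  qed simp
  ultimately show ?l unfolding det4_def
    using det_0_iff_vec_prod_zero_field[OF mat_carrier[of 4 4 "\<lambda>(i,j). c j i"]] vec_carrier by blast
qed

lemma K2: assumes "det4 c \<noteq> 0" shows "\<exists>s. \<forall>i<4. (\<Sum>j<4. s j * c j i) = (y i :: 'a::field)"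
proof -
  let ?A = "mat 4 4 (\<lambda>(i,j). c j i)"
  have A: "?A \<in> carrier_mat 4 4" by simp
  from det_non_zero_imp_unit[OF A assms[unfolded det4_def], of "()"]
  obtain B where B: "B \<in> carrier_mat 4 4" "?A * B = 1\<^sub>m 4"
    unfolding Units_def ring_mat_def by auto
  let ?s = "B *\<^sub>v vec 4 y"
  have "?A *\<^sub>v ?s = vec 4 y"
    using B A by (subst assoc_mult_mat_vec[symmetric, of _ 4 4 _ 4]) auto
  moreover have "?s = vec 4 (\<lambda>j. ?s $ j)" using B by auto
  ultimately have "?A *\<^sub>v vec 4 (\<lambda>j. ?s $ j) = vec 4 y" by simp
  have "\<forall>i<4. (\<Sum>j<4. ?s $ j * c j i) = y i"
  proof (intro allI impI)
    fix i :: nat assume i: "i < 4"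
    have "(?A *\<^sub>v vec 4 (\<lambda>j. ?s $ j)) $ i = vec 4 y $ i" using \<open>?A *\<^sub>v vec 4 (\<lambda>j. ?s $ j) = vec 4 y\<close> by simp
    thus "(\<Sum>j<4. ?s $ j * c j i) = y i" using mv4[OF i, of c "\<lambda>j. ?s $ j"] i by simp
  qed
  thus ?thesis by blast
qed

lemma tri_cong3: "(\<And>i. i < 4 \<Longrightarrow> z i = z' i) \<Longrightarrow> tri F x y z = tri F x y z'"
  unfolding tri_def trm_def Let_def
  by (intro sum.cong refl arg_cong2[where f="(*)"]) (simp add: idx_lt4)

lemma tri_quad: "tri F (\<lambda>i. a * x i + b * y i) (\<lambda>i. a * x i + b * y i) z =
   a^2 * tri F x x z + 2*a*b * tri F x y z + b^2 * tri F y y z"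
  unfolding tri_def trm_def Let_def sum_distrib_left sum.distrib[symmetric]
  by (intro sum.cong refl) (simp add: field_simps power2_eq_square)

lemma tri_cube: "tri F (\<lambda>i. a * x i + b * y i) (\<lambda>i. a * x i + b * y i) (\<lambda>i. a * x i + b * y i) =
   a^3 * tri F x x x + 3*a^2*b * tri F x x y + 3*a*b^2 * tri F x y y + b^3 * tri F y y y"
  unfolding tri_def trm_def Let_def sum_distrib_left sum.distrib[symmetric]
  by (intro sum.cong refl) (simp add: field_simps power2_eq_square power3_eq_cube)

lemma tri_lin3: "tri F x y (\<lambda>i. a * u i + b * v i) = a * tri F x y u + b * tri F x y v"
  by (simp add: tri_add3 tri_smult3)

lemma tri_cube3: "tri F (\<lambda>i. a * x i + b * y i + c * z i) (\<lambda>i. a * x i + b * y i + c * z i) (\<lambda>i. a * x i + b * y i + c * z i) =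
   a^3 * tri F x x x + 3*a^2*b * tri F x x y + 3*a*b^2 * tri F x y y + b^3 * tri F y y y
 + 3*a^2*c * tri F x x z + 6*a*b*c * tri F x y z + 3*b^2*c * tri F y y z
 + 3*a*c^2 * tri F x z z + 3*b*c^2 * tri F y z z + c^3 * tri F z z z"
proof -
  let ?s = "\<lambda>i. a * x i + b * y i"
  have e: "(\<lambda>i. a * x i + b * y i + c * z i) = (\<lambda>i. 1 * ?s i + c * z i)" by simp
  have l: "tri F ?s z z = a * tri F x z z + b * tri F y z z" by (simp add: tri_add1 tri_smult1)
  show ?thesis unfolding e tri_cube tri_quad l by (simp add: algebra_simps power2_eq_square power3_eq_cube)
qed

definition rv :: "(nat \<Rightarrow> rat) \<Rightarrow> nat \<Rightarrow> complex" where
  "rv p = (\<lambda>i. of_rat (p i))"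

definition indep2 :: "(nat \<Rightarrow> 'a::field) \<Rightarrow> (nat \<Rightarrow> 'a) \<Rightarrow> bool" where
  "indep2 p q \<longleftrightarrow> (\<forall>s t. (\<forall>i<4. s * p i + t * q i = 0) \<longrightarrow> s = 0 \<and> t = 0)"

lemma sum4: "(\<Sum>j<(4::nat). f j) = f 0 + f 1 + f 2 + (f 3 :: 'a::comm_monoid_add)"
  by (simp add: eval_nat_numeral)

lemma qlineE:
  assumes "qline L"
  obtains p q where "p \<in> Q4" "q \<in> Q4" "indep2 p q" "L = {(\<lambda>i. s * p i + t * q i) | s t. True}"
proof -
  from assms obtain p q where pq: "p \<in> Q4" "q \<in> Q4"
    "\<forall>s t. (\<lambda>i. s * p i + t * q i) = (\<lambda>i. 0) \<longrightarrow> s = 0 \<and> t = 0"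
    "L = {(\<lambda>i. s * p i + t * q i) | s t. True}" unfolding qline_def by blast
  have "indep2 p q" unfolding indep2_def
  proof (intro allI impI)
    fix s t assume h: "\<forall>i<4. s * p i + t * q i = 0"
    have "(\<lambda>i. s * p i + t * q i) = (\<lambda>i. 0)"
    proof
      fix i show "s * p i + t * q i = 0"
        using h pq(1,2) by (cases "i < 4") (auto simp: Q4_def)
    qed
    thus "s = 0 \<and> t = 0" using pq(3) by blast
  qed
  thus ?thesis using that pq by blast
qed

lemma indep2_minor:
  assumes "p \<in> Q4" "q \<in> Q4" "indep2 p q"
  shows "\<exists>i<4. \<exists>j<4. p i * q j - p j * q i \<noteq> 0"
proof (rule ccontr)
  assume "\<not> ?thesis"
  hence m: "\<And>i j. i < 4 \<Longrightarrow> j < 4 \<Longrightarrow> p i * q j = p j * q i" by auto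
  show False
  proof (cases "\<exists>k<4. p k \<noteq> 0")
    case True
    then obtain k where k: "k < 4" "p k \<noteq> 0" by blast
    have "\<forall>i<4. q k * p i + (- p k) * q i = 0"
    proof (intro allI impI)
      fix i :: nat assume i: "i < 4"
      have "q k * p i + (- p k) * q i = p i * q k - p k * q i" by (simp add: algebra_simps)
      also have "\<dots> = 0" using m[OF i k(1)] by simp
      finally show "q k * p i + (- p k) * q i = 0" .
    qed
    hence "q k = 0 \<and> - p k = 0" using assms(3) unfolding indep2_def by blast
    thus False using k by simp
  next
    case False
    hence "\<forall>i<4. 1 * p i + 0 * q i = 0" by auto
    hence "(1::rat) = 0 \<and> (0::rat) = 0" using assms(3) unfolding indep2_def by blast
    thus False by simp
  qed
qed

lemma indep2_rv:
  assumes "p \<in> Q4" "q \<in> Q4" "indep2 p q"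
  shows "indep2 (rv p) (rv q)"
proof -
  obtain i j where ij: "i < 4" "j < 4" "p i * q j - p j * q i \<noteq> 0" using indep2_minor[OF assms] by blast
  have D: "rv p i * rv q j - rv p j * rv q i \<noteq> 0" using ij(3) unfolding rv_def
    by (metis (no_types, lifting) of_rat_diff of_rat_eq_0_iff of_rat_mult)
  show ?thesis unfolding indep2_def
  proof (intro allI impI)
    fix s t assume h: "\<forall>i<4. s * rv p i + t * rv q i = 0"
    have e1: "s * rv p i + t * rv q i = 0" "s * rv p j + t * rv q j = 0" using h ij by auto
    have "s * (rv p i * rv q j - rv p j * rv q i) = rv q j * (s * rv p i + t * rv q i) - rv q i * (s * rv p j + t * rv q j)"
      by (simp add: algebra_simps)
    hence "s = 0" using e1 D by simp
    moreover have "t * (rv p i * rv q j - rv p j * rv q i) = rv p i * (s * rv p j + t * rv q j) - rv p j * (s * rv p i + t * rv q i)"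
      by (simp add: algebra_simps)
    hence "t = 0" using e1 D by simp
    ultimately show "s = 0 \<and> t = 0" by simp
  qed
qed

lemma ratcoef:
  assumes "p \<in> Q4" "q \<in> Q4" "indep2 p q"
    and h: "\<forall>i<4. y i = s * rv p i + t * rv q i" and y: "\<forall>i<4. y i \<in> \<rat>"
  shows "s \<in> \<rat> \<and> t \<in> \<rat>"
proof -
  obtain i j where ij: "i < 4" "j < 4" "p i * q j - p j * q i \<noteq> 0" using indep2_minor[OF assms(1-3)] by blast
  let ?D = "rv p i * rv q j - rv p j * rv q i"
  have Dq: "?D = of_rat (p i * q j - p j * q i)" unfolding rv_def by (simp add: of_rat_diff of_rat_mult)
  hence D: "?D \<noteq> 0" using ij(3) by simp
  have hi: "y i = s * rv p i + t * rv q i" and hj: "y j = s * rv p j + t * rv q j" using h ij by auto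
  have "s * ?D = rv q j * y i - rv q i * y j" unfolding hi hj by (simp add: algebra_simps)
  hence s: "s = (rv q j * y i - rv q i * y j) / ?D" using D by (simp add: eq_divide_eq)
  have "t * ?D = rv p i * y j - rv p j * y i" unfolding hi hj by (simp add: algebra_simps)
  hence t: "t = (rv p i * y j - rv p j * y i) / ?D" using D by (simp add: eq_divide_eq)
  have Q: "rv p k \<in> \<rat>" "rv q k \<in> \<rat>" for k unfolding rv_def by auto
  have yi: "y i \<in> \<rat>" "y j \<in> \<rat>" using y ij by auto
  have DQ: "?D \<in> \<rat>" using Dq by simp
  have "(rv q j * y i - rv q i * y j) / ?D \<in> \<rat>"
    by (intro Rats_divide Rats_diff Rats_mult Q yi DQ)
  moreover have "(rv p i * y j - rv p j * y i) / ?D \<in> \<rat>"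
    by (intro Rats_divide Rats_diff Rats_mult Q yi DQ)
  ultimately show ?thesis using s t by simp
qed

definition span2 :: "(nat \<Rightarrow> 'a::field) \<Rightarrow> (nat \<Rightarrow> 'a) \<Rightarrow> (nat \<Rightarrow> 'a) set" where
  "span2 p q = {(\<lambda>i. s * p i + t * q i) | s t. True}"

lemma span2_I: "(\<lambda>i. s * p i + t * q i) \<in> span2 p q"
  unfolding span2_def by blast

lemma span2_E: assumes "x \<in> span2 p q" obtains s t where "x = (\<lambda>i. s * p i + t * q i)"
  using assms unfolding span2_def by blast

lemma span2_closed:
  assumes "x \<in> span2 p q" "y \<in> span2 p q"
  shows "(\<lambda>i. a * x i + b * y i) \<in> span2 p q"
proof -
  obtain s t where x: "x = (\<lambda>i. s * p i + t * q i)" using assms(1) by (rule span2_E)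
  obtain s' t' where y: "y = (\<lambda>i. s' * p i + t' * q i)" using assms(2) by (rule span2_E)
  have "(\<lambda>i. a * x i + b * y i) = (\<lambda>i. (a*s+b*s') * p i + (a*t+b*t') * q i)"
    unfolding x y by (simp add: algebra_simps)
  thus ?thesis using span2_I by metis
qed

lemma span2_sub: assumes "x \<in> span2 p q" "y \<in> span2 p q" shows "span2 x y \<subseteq> span2 p q"
proof
  fix z assume "z \<in> span2 x y"
  then obtain s t where "z = (\<lambda>i. s * x i + t * y i)" by (rule span2_E)
  thus "z \<in> span2 p q" using span2_closed[OF assms] by simp
qed

lemma span2_base: "p \<in> span2 p q" "q \<in> span2 p q"
proof -
  have "p = (\<lambda>i. 1 * p i + 0 * q i)" by simp
  thus "p \<in> span2 p q" using span2_I by metis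
  have "q = (\<lambda>i. 0 * p i + 1 * q i)" by simp
  thus "q \<in> span2 p q" using span2_I by metis
qed

lemma span2_zero: "(\<lambda>i. 0) \<in> span2 p q"
proof -
  have "(\<lambda>i. 0) = (\<lambda>i. 0 * p i + 0 * q i)" by simp
  thus ?thesis using span2_I by metis
qed

lemma span2_Q4: "p \<in> Q4 \<Longrightarrow> q \<in> Q4 \<Longrightarrow> x \<in> span2 p q \<Longrightarrow> x \<in> Q4"
  by (auto simp: Q4_def span2_def)

lemma qline_iff: "qline L \<longleftrightarrow> (\<exists>p q. p \<in> Q4 \<and> q \<in> Q4 \<and> indep2 p q \<and> L = span2 p q)"
proof
  assume "qline L"
  then obtain p q where "p \<in> Q4" "q \<in> Q4" "indep2 p q" "L = {(\<lambda>i. s * p i + t * q i) | s t. True}"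
    by (rule qlineE)
  thus "\<exists>p q. p \<in> Q4 \<and> q \<in> Q4 \<and> indep2 p q \<and> L = span2 p q" unfolding span2_def by blast
next
  assume "\<exists>p q. p \<in> Q4 \<and> q \<in> Q4 \<and> indep2 p q \<and> L = span2 p q"
  then obtain p q where pq: "p \<in> Q4" "q \<in> Q4" "indep2 p q" "L = span2 p q" by blast
  have "\<forall>s t. (\<lambda>i. s * p i + t * q i) = (\<lambda>i. 0) \<longrightarrow> s = 0 \<and> t = 0"
  proof (intro allI impI)
    fix s t assume "(\<lambda>i. s * p i + t * q i) = (\<lambda>i. 0::rat)"
    hence "\<forall>i<4. s * p i + t * q i = 0" by (metis)
    thus "s = 0 \<and> t = 0" using pq(3) unfolding indep2_def by blast
  qed
  thus "qline L" unfolding qline_def using pq unfolding span2_def by blast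
qed

lemma rv_span: "x \<in> span2 p q \<Longrightarrow> rv x \<in> span2 (rv p) (rv q)"
proof -
  assume "x \<in> span2 p q"
  then obtain s t where x: "x = (\<lambda>i. s * p i + t * q i)" by (rule span2_E)
  have "rv x = (\<lambda>i. of_rat s * rv p i + of_rat t * rv q i)"
    unfolding x rv_def by (simp add: of_rat_add of_rat_mult)
  thus ?thesis using span2_I by metis
qed

lemma cspan_eq: "cspan (span2 p q) = span2 (rv p) (rv q)"
proof
  show "cspan (span2 p q) \<subseteq> span2 (rv p) (rv q)"
  proof
    fix w assume "w \<in> cspan (span2 p q)"
    then obtain s t p1 q1 where w: "w = (\<lambda>i. s * of_rat (p1 i) + t * of_rat (q1 i))"
      and p1: "p1 \<in> span2 p q" and q1: "q1 \<in> span2 p q" unfolding cspan_def by blast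
    have "w = (\<lambda>i. s * rv p1 i + t * rv q1 i)" unfolding w rv_def by simp
    thus "w \<in> span2 (rv p) (rv q)" using span2_closed[OF rv_span[OF p1] rv_span[OF q1]] by simp
  qed
next
  show "span2 (rv p) (rv q) \<subseteq> cspan (span2 p q)"
  proof
    fix w assume "w \<in> span2 (rv p) (rv q)"
    then obtain s t where w: "w = (\<lambda>i. s * rv p i + t * rv q i)" by (rule span2_E)
    hence "w = (\<lambda>i. s * of_rat (p i) + t * of_rat (q i))" unfolding rv_def by simp
    thus "w \<in> cspan (span2 p q)" unfolding cspan_def using span2_base by blast
  qed
qed

lemma mem_iff:
  assumes "p \<in> Q4" "q \<in> Q4" "indep2 p q"
  shows "rv x \<in> span2 (rv p) (rv q) \<longleftrightarrow> x \<in> span2 p q"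
proof
  assume "rv x \<in> span2 (rv p) (rv q)"
  then obtain s t where h: "rv x = (\<lambda>i. s * rv p i + t * rv q i)" by (rule span2_E)
  have "\<forall>i<4. rv x i = s * rv p i + t * rv q i" using h by metis
  moreover have "\<forall>i<4. rv x i \<in> \<rat>" unfolding rv_def by auto
  ultimately have "s \<in> \<rat> \<and> t \<in> \<rat>" using ratcoef[OF assms] by blast
  then obtain s' t' where st: "s = of_rat s'" "t = of_rat t'" by (auto elim!: Rats_cases)
  have "x = (\<lambda>i. s' * p i + t' * q i)"
  proof
    fix i
    have "of_rat (x i) = (of_rat (s' * p i + t' * q i) :: complex)"
      using fun_cong[OF h, of i] unfolding st rv_def by (simp add: of_rat_add of_rat_mult)
    thus "x i = s' * p i + t' * q i" by simp
  qed
  thus "x \<in> span2 p q" using span2_I by metis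
qed (rule rv_span)

lemma sub_eq:
  assumes "p \<in> Q4" "q \<in> Q4" "indep2 p q" "p' \<in> Q4" "q' \<in> Q4" "indep2 p' q'"
    and sub: "span2 p q \<subseteq> span2 p' q'"
  shows "span2 p q = span2 p' q'"
proof -
  obtain a b where p: "p = (\<lambda>i. a * p' i + b * q' i)" using sub span2_base(1) by (metis span2_E subsetD)
  obtain c d where q: "q = (\<lambda>i. c * p' i + d * q' i)" using sub span2_base(2) by (metis span2_E subsetD)
  define D where "D = a * d - b * c"
  have D: "D \<noteq> 0"
  proof
    assume D0: "D = 0"
    have "\<forall>i<4. d * p i + (- b) * q i = 0"
    proof (intro allI impI)
      fix i :: nat
      have "d * p i + (- b) * q i = D * p' i" unfolding p q D_def by (simp add: algebra_simps)
      thus "d * p i + (- b) * q i = 0" using D0 by simp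
    qed
    hence db: "d = 0 \<and> - b = 0" using assms(3) unfolding indep2_def by blast
    have "\<forall>i<4. (- c) * p i + a * q i = 0"
    proof (intro allI impI)
      fix i :: nat
      have "(- c) * p i + a * q i = D * q' i" unfolding p q D_def by (simp add: algebra_simps)
      thus "(- c) * p i + a * q i = 0" using D0 by simp
    qed
    hence ca: "- c = 0 \<and> a = 0" using assms(3) unfolding indep2_def by blast
    have "\<forall>i<4. 1 * p i + 0 * q i = 0" using db ca unfolding p by simp
    hence "(1::rat) = 0 \<and> (0::rat) = 0" using assms(3) unfolding indep2_def by blast
    thus False by simp
  qed
  have "p' = (\<lambda>i. (d/D) * p i + (-b/D) * q i)"
  proof
    fix i
    have "(d/D) * p i + (-b/D) * q i = ((a*d - b*c)/D) * p' i" unfolding p q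
      using D by (simp add: field_simps)
    thus "p' i = (d/D) * p i + (-b/D) * q i" using D unfolding D_def by simp
  qed
  hence p'm: "p' \<in> span2 p q" using span2_I by metis
  have "q' = (\<lambda>i. (-c/D) * p i + (a/D) * q i)"
  proof
    fix i
    have "(-c/D) * p i + (a/D) * q i = ((a*d - b*c)/D) * q' i" unfolding p q
      using D by (simp add: field_simps)
    thus "q' i = (-c/D) * p i + (a/D) * q i" using D unfolding D_def by simp
  qed
  hence q'm: "q' \<in> span2 p q" using span2_I by metis
  show ?thesis using span2_sub[OF p'm q'm] sub by blast
qed

lemma cspan_inj:
  assumes "qline L" "qline L'" "cspan L \<subseteq> cspan L'"
  shows "L = L'"
proof -
  obtain p q where pq: "p \<in> Q4" "q \<in> Q4" "indep2 p q" "L = span2 p q" using assms(1) qline_iff by blast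
  obtain p' q' where pq': "p' \<in> Q4" "q' \<in> Q4" "indep2 p' q'" "L' = span2 p' q'" using assms(2) qline_iff by blast
  have "span2 p q \<subseteq> span2 p' q'"
  proof
    fix x assume x: "x \<in> span2 p q"
    have "rv x \<in> span2 (rv p) (rv q)" using rv_span[OF x] .
    hence "rv x \<in> span2 (rv p') (rv q')" using assms(3) unfolding pq(4) pq'(4) cspan_eq by blast
    thus "x \<in> span2 p' q'" using mem_iff[OF pq'(1-3)] by blast
  qed
  thus ?thesis using sub_eq[OF pq(1-3) pq'(1-3)] pq(4) pq'(4) by simp
qed

definition col4 :: "'a \<Rightarrow> 'a \<Rightarrow> 'a \<Rightarrow> 'a \<Rightarrow> nat \<Rightarrow> 'a" where
  "col4 a b c d j = (if j = 0 then a else if j = 1 then b else if j = 2 then c else d)"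

lemma col4_simps[simp]: "col4 a b c d 0 = a" "col4 a b c d 1 = b" "col4 a b c d (Suc 0) = b" "col4 a b c d 2 = c" "col4 a b c d 3 = d"
  by (simp_all add: col4_def)

lemma sum_col4: "(\<Sum>j<4. col4 a b c d j * f j) = a * f 0 + b * f 1 + c * f 2 + d * (f 3 :: 'a::comm_ring_1)"
  by (simp add: sum4 col4_def)

lemma sum_col4': "(\<Sum>j<4. s j * col4 a b c d j i) = s 0 * a i + s 1 * b i + s 2 * c i + s 3 * (d i :: 'a::comm_ring_1)"
  by (simp add: sum4 col4_def)

lemma meet_rat:
  assumes pq1: "p1 \<in> Q4" "q1 \<in> Q4" "indep2 p1 q1" and pq2: "p2 \<in> Q4" "q2 \<in> Q4" "indep2 p2 q2"
    and z1: "z \<in> span2 (rv p1) (rv q1)" and z2: "z \<in> span2 (rv p2) (rv q2)" and nz: "z \<noteq> (\<lambda>i. 0)"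
  shows "\<exists>e. e \<in> span2 p1 q1 \<and> e \<in> span2 p2 q2 \<and> e \<noteq> (\<lambda>i. 0)"
proof -
  obtain s1 t1 where h1: "z = (\<lambda>i. s1 * rv p1 i + t1 * rv q1 i)" using z1 by (rule span2_E)
  obtain s2 t2 where h2: "z = (\<lambda>i. s2 * rv p2 i + t2 * rv q2 i)" using z2 by (rule span2_E)
  have st1: "s1 \<noteq> 0 \<or> t1 \<noteq> 0" using nz h1 by auto
  define cr where "cr = col4 p1 q1 p2 q2"
  have "det4 (\<lambda>j i. of_rat (cr j i) :: complex) = 0"
  proof -
    have "\<forall>i<4. (\<Sum>j<4. col4 s1 t1 (-s2) (-t2) j * of_rat (cr j i)) = 0"
    proof (intro allI impI)
      fix i :: nat
      have e1: "z i = s1 * rv p1 i + t1 * rv q1 i" using h1 by simp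
      have e2: "z i = s2 * rv p2 i + t2 * rv q2 i" using h2 by simp
      have "(\<Sum>j<4. col4 s1 t1 (-s2) (-t2) j * of_rat (cr j i)) = (s1 * rv p1 i + t1 * rv q1 i) - (s2 * rv p2 i + t2 * rv q2 i)"
        unfolding sum_col4 cr_def rv_def by simp
      also have "\<dots> = 0" using e1 e2 by simp
      finally show "(\<Sum>j<4. col4 s1 t1 (-s2) (-t2) j * of_rat (cr j i)) = 0" .
    qed
    moreover have "\<exists>j<4. col4 s1 t1 (-s2) (-t2) j \<noteq> 0"
    proof (cases "s1 = 0")
      case False then show ?thesis by (intro exI[of _ 0]) simp
    next
      case True then have "t1 \<noteq> 0" using st1 by simp
      then show ?thesis by (intro exI[of _ 1]) simp
    qed
    ultimately show ?thesis using K1[of "\<lambda>j i. of_rat (cr j i) :: complex"] by blast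
  qed
  hence "det4 cr = 0" using K3[of cr, where 'a=complex] by simp
  then obtain g where g: "\<exists>j<4. g j \<noteq> 0" "\<forall>i<4. (\<Sum>j<4. g j * cr j i) = 0" using K1[of cr] by blast
  have rel: "g 0 * p1 i + g 1 * q1 i + g 2 * p2 i + g 3 * q2 i = 0" if "i < 4" for i
    using g(2) that unfolding cr_def sum_col4' by simp
  define e where "e = (\<lambda>i. g 0 * p1 i + g 1 * q1 i)"
  have e1: "e \<in> span2 p1 q1" unfolding e_def by (rule span2_I)
  have e2eq: "e = (\<lambda>i. (- g 2) * p2 i + (- g 3) * q2 i)"
  proof
    fix i :: nat
    show "e i = (- g 2) * p2 i + (- g 3) * q2 i"
    proof (cases "i < 4")
      case True
      from rel[OF True] show ?thesis unfolding e_def by (simp add: algebra_simps)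
    next
      case False
      thus ?thesis using pq1 pq2 unfolding e_def Q4_def by simp
    qed
  qed
  have e2: "e \<in> span2 p2 q2" unfolding e2eq by (rule span2_I)
  have "e \<noteq> (\<lambda>i. 0)"
  proof
    assume e0: "e = (\<lambda>i. 0)"
    have "\<forall>i<4. g 0 * p1 i + g 1 * q1 i = 0" using e0 unfolding e_def by metis
    hence a: "g 0 = 0 \<and> g 1 = 0" using pq1(3) unfolding indep2_def by blast
    have "\<forall>i<4. (- g 2) * p2 i + (- g 3) * q2 i = 0" using e0 e2eq by metis
    hence b: "- g 2 = 0 \<and> - g 3 = 0" using pq2(3) unfolding indep2_def by blast
    obtain j where j: "j < 4" "g j \<noteq> 0" using g(1) by blast
    from l4[OF j(1)] show False using a b j(2) by auto
  qed
  thus ?thesis using e1 e2 by blast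
qed

lemma rebase:
  assumes "p \<in> Q4" "q \<in> Q4" "indep2 p q" "e \<in> span2 p q" "e \<noteq> (\<lambda>i. 0)"
  shows "\<exists>u. u \<in> Q4 \<and> e \<in> Q4 \<and> indep2 e u \<and> span2 p q = span2 e u"
proof -
  obtain a b where e: "e = (\<lambda>i. a * p i + b * q i)" using assms(4) by (rule span2_E)
  have eQ: "e \<in> Q4" using span2_Q4[OF assms(1,2,4)] .
  show ?thesis
  proof (cases "a = 0")
    case False
    have ind: "indep2 e q" unfolding indep2_def
    proof (intro allI impI)
      fix s t assume h: "\<forall>i<4. s * e i + t * q i = 0"
      have "\<forall>i<4. (s*a) * p i + (s*b+t) * q i = 0"
        using h unfolding e by (simp add: algebra_simps)
      hence "s*a = 0 \<and> s*b+t = 0" using assms(3) unfolding indep2_def by blast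
      thus "s = 0 \<and> t = 0" using False by auto
    qed
    have "p = (\<lambda>i. (1/a) * e i + (-b/a) * q i)"
      unfolding e using False by (simp add: field_simps)
    hence "p \<in> span2 e q" using span2_I by metis
    hence "span2 p q \<subseteq> span2 e q" using span2_sub span2_base(2) by metis
    moreover have "span2 e q \<subseteq> span2 p q" using span2_sub assms(4) span2_base(2) by metis
    ultimately show ?thesis using ind eQ assms(2) by blast
  next
    case True
    have b: "b \<noteq> 0" using assms(5) True unfolding e by auto
    have ind: "indep2 e p" unfolding indep2_def
    proof (intro allI impI)
      fix s t assume h: "\<forall>i<4. s * e i + t * p i = 0"
      have "\<forall>i<4. t * p i + (s*b) * q i = 0"
        using h unfolding e True by (simp add: algebra_simps)
      hence "t = 0 \<and> s*b = 0" using assms(3) unfolding indep2_def by blast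
      thus "s = 0 \<and> t = 0" using b by auto
    qed
    have "q = (\<lambda>i. (1/b) * e i + 0 * p i)"
      unfolding e True using b by simp
    hence "q \<in> span2 e p" using span2_I by metis
    hence "span2 p q \<subseteq> span2 e p" using span2_sub span2_base(2) by metis
    moreover have "span2 e p \<subseteq> span2 p q" using span2_sub assms(4) span2_base(1) by metis
    ultimately show ?thesis using ind eQ assms(1) by blast
  qed
qed

lemma det4_T: "det4 (\<lambda>j i. c i j) = det4 (c :: nat \<Rightarrow> nat \<Rightarrow> 'a::field)"
proof -
  have "mat 4 4 (\<lambda>(i,j). c i j) = transpose_mat (mat 4 4 (\<lambda>(i,j). c j i))" by (rule eq_matI) auto
  thus ?thesis unfolding det4_def by (metis det_transpose mat_carrier)
qed

lemma complete_w:
  assumes "e \<in> Q4" "u \<in> Q4" "v \<in> Q4"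
    and ind: "\<forall>a b c. (\<forall>i<4. a * e i + b * u i + c * v i = 0) \<longrightarrow> a = 0 \<and> b = 0 \<and> c = 0"
  shows "\<exists>w \<in> Q4. det4 (col4 e u v w) \<noteq> 0"
proof (rule ccontr)
  assume "\<not> ?thesis"
  hence H: "\<forall>w\<in>Q4. det4 (col4 e u v w) = 0" by blast
  define dl where "dl j = (\<lambda>i::nat. if i = j then (1::rat) else 0)" for j
  have dlQ: "j < 4 \<Longrightarrow> dl j \<in> Q4" for j by (auto simp: Q4_def dl_def)
  have ex: "\<forall>j. \<exists>abc. j < 4 \<longrightarrow> (\<forall>i<4. dl j i = fst abc * e i + fst (snd abc) * u i + snd (snd abc) * v i)"
  proof
    fix j :: nat
    show "\<exists>abc. j < 4 \<longrightarrow> (\<forall>i<4. dl j i = fst abc * e i + fst (snd abc) * u i + snd (snd abc) * v i)"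
    proof (cases "j < 4")
      case False thus ?thesis by blast
    next
      case True
      have "det4 (col4 e u v (dl j)) = 0" using H dlQ[OF True] by blast
      then obtain g where g: "\<exists>k<4. g k \<noteq> 0" "\<forall>i<4. (\<Sum>k<4. g k * col4 e u v (dl j) k i) = 0"
        using K1 by blast
      have r: "g 0 * e i + g 1 * u i + g 2 * v i + g 3 * dl j i = 0" if "i<4" for i
        using g(2) that unfolding sum_col4' by simp
      have g3: "g 3 \<noteq> 0"
      proof
        assume g30: "g 3 = 0"
        hence "\<forall>i<4. g 0 * e i + g 1 * u i + g 2 * v i = 0" using r by simp
        hence "g 0 = 0 \<and> g 1 = 0 \<and> g 2 = 0" using ind by blast
        moreover obtain k where "k < 4" "g k \<noteq> 0" using g(1) by blast
        ultimately show False using g30 l4 by auto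
      qed
      have "\<forall>i<4. dl j i = (-g 0/g 3) * e i + (-g 1/g 3) * u i + (-g 2/g 3) * v i"
      proof (intro allI impI)
        fix i :: nat assume i: "i < 4"
        have "g 3 * dl j i = -(g 0 * e i + g 1 * u i + g 2 * v i)" using r[OF i] by linarith
        have "dl j i = (g 3 * dl j i) / g 3" using g3 by simp
        also have "\<dots> = -(g 0 * e i + g 1 * u i + g 2 * v i) / g 3" using \<open>g 3 * dl j i = _\<close> by simp
        also have "\<dots> = (-g 0/g 3) * e i + (-g 1/g 3) * u i + (-g 2/g 3) * v i"
          using g3 by (simp add: field_simps)
        finally show "dl j i = (-g 0/g 3) * e i + (-g 1/g 3) * u i + (-g 2/g 3) * v i" .
      qed
      thus ?thesis by (intro exI[of _ "(-g 0/g 3, -g 1/g 3, -g 2/g 3)"]) simp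
    qed
  qed
  obtain f where f: "\<And>j i. j < 4 \<Longrightarrow> i < 4 \<Longrightarrow> dl j i = fst (f j) * e i + fst (snd (f j)) * u i + snd (snd (f j)) * v i"
    using choice[OF ex] by blast
  define A where "A j = fst (f j)" for j
  define B where "B j = fst (snd (f j))" for j
  define C where "C j = snd (snd (f j))" for j
  define N where "N = (\<lambda>j i. col4 (A j) (B j) (C j) 0 i)"
  have "det4 (\<lambda>j i. N i j) = 0"
  proof -
    have "\<forall>i<4. (\<Sum>k<4. dl 3 k * N i k) = 0"
      unfolding N_def dl_def by (simp add: sum4)
    moreover have "\<exists>k<4. dl 3 k \<noteq> 0" by (intro exI[of _ 3]) (simp add: dl_def)
    ultimately show ?thesis using K1[of "\<lambda>j i. N i j"] by blast
  qed
  hence "det4 N = 0" using det4_T[of N] by simp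
  then obtain s where s: "\<exists>k<4. s k \<noteq> 0" "\<forall>i<4. (\<Sum>j<4. s j * N j i) = 0" using K1 by blast
  have SA: "(\<Sum>j<4. s j * A j) = 0" using s(2)[rule_format, of 0] unfolding N_def by simp
  have SB: "(\<Sum>j<4. s j * B j) = 0" using s(2)[rule_format, of 1] unfolding N_def by simp
  have SC: "(\<Sum>j<4. s j * C j) = 0" using s(2)[rule_format, of 2] unfolding N_def by simp
  have "s k = 0" if k: "k < 4" for k
  proof -
    have "s k = (\<Sum>j<4. s j * dl j k)"
      using l4[OF k] unfolding dl_def by (auto simp: sum4)
    also have "\<dots> = (\<Sum>j<4. s j * (A j * e k + B j * u k + C j * v k))"
      by (intro sum.cong refl) (simp add: f k A_def B_def C_def)
    also have "\<dots> = (\<Sum>j<4. s j * A j) * e k + (\<Sum>j<4. s j * B j) * u k + (\<Sum>j<4. s j * C j) * v k"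
      by (simp add: sum4 algebra_simps)
    also have "\<dots> = 0" using SA SB SC by simp
    finally show ?thesis .
  qed
  thus False using s(1) by blast
qed

lemma frame_C:
  assumes "det4 (col4 E U V W) \<noteq> (0::complex)"
  shows "\<forall>a b c d. (\<forall>i<4. a * E i + b * U i + c * V i + d * W i = 0) \<longrightarrow> a = 0 \<and> b = 0 \<and> c = 0 \<and> d = 0"
    and "\<forall>y. \<exists>a b c d. \<forall>i<4. y i = a * E i + b * U i + c * V i + d * W i"
proof -
  show "\<forall>a b c d. (\<forall>i<4. a * E i + b * U i + c * V i + d * W i = 0) \<longrightarrow> a = 0 \<and> b = 0 \<and> c = 0 \<and> d = 0"
  proof (intro allI impI)
    fix a b c d assume h: "\<forall>i<4. a * E i + b * U i + c * V i + d * W i = 0"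
    show "a = 0 \<and> b = 0 \<and> c = 0 \<and> d = 0"
    proof (rule ccontr)
      assume nz: "\<not> (a = 0 \<and> b = 0 \<and> c = 0 \<and> d = 0)"
      have "\<exists>j<4. col4 a b c d j \<noteq> 0"
      proof -
        consider "a \<noteq> 0" | "b \<noteq> 0" | "c \<noteq> 0" | "d \<noteq> 0" using nz by blast
        thus ?thesis
        proof cases
          case 1 thus ?thesis by (intro exI[of _ 0]) simp
        next
          case 2 thus ?thesis by (intro exI[of _ 1]) simp
        next
          case 3 thus ?thesis by (intro exI[of _ 2]) simp
        next
          case 4 thus ?thesis by (intro exI[of _ 3]) simp
        qed
      qed
      moreover have "\<forall>i<4. (\<Sum>j<4. col4 a b c d j * col4 E U V W j i) = 0"
        using h unfolding sum_col4' by simp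
      ultimately have "det4 (col4 E U V W) = 0" using K1 by blast
      thus False using assms by simp
    qed
  qed
  show "\<forall>y. \<exists>a b c d. \<forall>i<4. y i = a * E i + b * U i + c * V i + d * W i"
  proof
    fix y
    obtain s where "\<forall>i<4. (\<Sum>j<4. s j * col4 E U V W j i) = y i" using K2[OF assms] by blast
    hence "\<forall>i<4. y i = s 0 * E i + s 1 * U i + s 2 * V i + s 3 * W i" unfolding sum_col4' by simp
    thus "\<exists>a b c d. \<forall>i<4. y i = a * E i + b * U i + c * V i + d * W i" by blast
  qed
qed

lemma det4_rv: "det4 (col4 (rv e) (rv u) (rv v) (rv w)) = of_rat (det4 (col4 e u v w))"
proof -
  have "col4 (rv e) (rv u) (rv v) (rv w) = (\<lambda>j i. of_rat (col4 e u v w j i))"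
    by (auto simp: col4_def rv_def fun_eq_iff)
  thus ?thesis using K3 by metis
qed

lemma quad_root: "\<exists>a b::complex. (a \<noteq> 0 \<or> b \<noteq> 0) \<and> a^2 * A + 2*a*b * B + b^2 * C = 0"
proof (cases "A = 0")
  case True
  thus ?thesis by (intro exI[of _ 1] exI[of _ 0]) simp
next
  case False
  define r where "r = csqrt (B^2 - A*C)"
  have r2: "r^2 = B^2 - A*C" unfolding r_def by simp
  define a where "a = (-B + r) / A"
  have "a^2 * A + 2*a*1 * B + 1^2 * C = (r^2 - B^2 + A*C) / A"
    unfolding a_def using False by (simp add: field_simps power2_eq_square)
  also have "\<dots> = 0" using r2 by simp
  finally show ?thesis by (intro exI[of _ a] exI[of _ 1]) simp
qed

lemma extract4:
  assumes "\<And>a b. a^3*T0 + 3*a^2*b*T1 + 3*a*b^2*T2 + b^3*T3 = (0::complex)"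
  shows "T0 = 0 \<and> T1 = 0 \<and> T2 = 0 \<and> T3 = 0"
proof -
  have 1: "T0 = 0" using assms[of 1 0] by simp
  have 2: "T3 = 0" using assms[of 0 1] by simp
  have 3: "T0 + 3*T1 + 3*T2 + T3 = 0" using assms[of 1 1] by simp
  have 4: "T0 - 3*T1 + 3*T2 - T3 = 0" using assms[of 1 "-1"] by (simp add: power3_eq_cube)
  from 1 2 3 4 show ?thesis by (simp add: algebra_simps)
qed

lemma line_tri:
  assumes "\<forall>x\<in>span2 X Y. cubic_eval F x = 0"
  shows "tri F X X X = 0 \<and> tri F X X Y = 0 \<and> tri F X Y Y = 0 \<and> tri F Y Y Y = 0"
proof -
  have H: "a^3 * tri F X X X + 3*a^2*b * tri F X X Y + 3*a*b^2 * tri F X Y Y + b^3 * tri F Y Y Y = 0" for a b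
  proof -
    have "tri F (\<lambda>i. a * X i + b * Y i) (\<lambda>i. a * X i + b * Y i) (\<lambda>i. a * X i + b * Y i) = 0"
      using assms span2_I[of a X b Y] unfolding eval_tri by blast
    thus ?thesis unfolding tri_cube .
  qed
  show ?thesis using extract4[of "tri F X X X" "tri F X X Y" "tri F X Y Y" "tri F Y Y Y", OF H] .
qed

lemma sing:
  fixes E U V W :: "nat \<Rightarrow> complex"
  assumes span: "\<forall>y. \<exists>a b c d. \<forall>i<4. y i = a * E i + b * U i + c * V i + d * W i"
    and indEU: "\<forall>a b. (\<forall>i<4. a * E i + b * U i = 0) \<longrightarrow> a = 0 \<and> b = 0"
    and t: "tri F E E E = 0" "tri F E E U = 0" "tri F E U U = 0" "tri F U U U = 0"
      "tri F E E V = 0" "tri F E U V = 0" "tri F U U V = 0"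
  shows "\<not> smooth_cubic F"
proof -
  obtain a b where ab: "a \<noteq> 0 \<or> b \<noteq> 0" "a^2 * tri F E E W + 2*a*b * tri F E U W + b^2 * tri F U U W = 0"
    using quad_root[of "tri F E E W" "tri F E U W" "tri F U U W"] by auto
  define x where "x = (\<lambda>i. a * E i + b * U i)"
  have xnz: "\<exists>i<4. x i \<noteq> 0"
  proof (rule ccontr)
    assume "\<not> ?thesis"
    hence "\<forall>i<4. a * E i + b * U i = 0" unfolding x_def by auto
    thus False using indEU ab(1) by blast
  qed
  have T: "tri F x x Y = a^2 * tri F E E Y + 2*a*b * tri F E U Y + b^2 * tri F U U Y" for Y
    unfolding x_def by (rule tri_quad)
  have sE: "tri F E U E = tri F E E U" "tri F U U E = tri F E U U"
    using tri_sym2[of F E U E] tri_sym2[of F U U E] tri_sym1[of F U E U] by simp_all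
  have sU: "tri F E E U = tri F E E U" "tri F E U U = tri F E U U" by simp_all
  have xE: "tri F x x E = 0" unfolding T sE using t by simp
  have xU: "tri F x x U = 0" unfolding T using t by simp
  have xV: "tri F x x V = 0" unfolding T using t by simp
  have xW: "tri F x x W = 0" unfolding T using ab(2) by simp
  have ev: "cubic_eval F x = 0"
    unfolding eval_tri x_def tri_cube using t by simp
  have pd: "cubic_partial F j x = 0" if j: "j < 4" for j
  proof -
    obtain a' b' c' d' where d: "\<forall>i<4. (if i = j then 1 else 0) = a' * E i + b' * U i + c' * V i + d' * W i"
      using span[rule_format, of "\<lambda>i. if i = j then 1 else 0"] by blast
    have "tri F x x (\<lambda>i. if i = j then 1 else 0) = tri F x x (\<lambda>i. a' * E i + b' * U i + c' * V i + d' * W i)"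
      by (rule tri_cong3) (simp add: d)
    also have "\<dots> = a' * tri F x x E + b' * tri F x x U + c' * tri F x x V + d' * tri F x x W"
      by (simp add: tri_add3 tri_smult3)
    also have "\<dots> = 0" using xE xU xV xW by simp
    finally show ?thesis unfolding partial_tri[OF j] by simp
  qed
  show ?thesis unfolding smooth_cubic_def using xnz ev pd by blast
qed

lemma lineq:
  fixes k1 k2 k3 :: rat
  assumes "k1 \<noteq> 0 \<or> (k2 \<noteq> 0 \<and> k3 \<noteq> 0)"
  shows "\<exists>a1 b1 c1 a2 b2 c2 :: rat.
    k1*a1 + k2*b1 + k3*c1 = 0 \<and> k1*a2 + k2*b2 + k3*c2 = 0 \<and>
    (\<forall>s t :: rat. s*a1 + t*a2 = 0 \<and> s*b1 + t*b2 = 0 \<and> s*c1 + t*c2 = 0 \<longrightarrow> s = 0 \<and> t = 0) \<and>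
    (\<forall>\<alpha> \<beta> \<gamma> :: complex. of_rat k1*\<alpha> + of_rat k2*\<beta> + of_rat k3*\<gamma> = 0 \<longrightarrow>
       (\<exists>s t. \<alpha> = s*of_rat a1 + t*of_rat a2 \<and> \<beta> = s*of_rat b1 + t*of_rat b2 \<and> \<gamma> = s*of_rat c1 + t*of_rat c2)) \<and>
    (c1 \<noteq> 0 \<or> c2 \<noteq> 0) \<and> (b1 \<noteq> 0 \<or> b2 \<noteq> 0)"
proof (cases "k1 = 0")
  case False
  have iii: "\<forall>\<alpha> \<beta> \<gamma> :: complex. of_rat k1*\<alpha> + of_rat k2*\<beta> + of_rat k3*\<gamma> = 0 \<longrightarrow>
       (\<exists>s t. \<alpha> = s*of_rat (-k2) + t*of_rat (-k3) \<and> \<beta> = s*of_rat k1 + t*of_rat 0 \<and> \<gamma> = s*of_rat 0 + t*of_rat k1)"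
  proof (intro allI impI)
    fix \<alpha> \<beta> \<gamma> :: complex assume h: "of_rat k1*\<alpha> + of_rat k2*\<beta> + of_rat k3*\<gamma> = 0"
    have K: "(of_rat k1 :: complex) \<noteq> 0" using False by simp
    have "\<alpha> = (\<beta> / of_rat k1) * of_rat (-k2) + (\<gamma> / of_rat k1) * of_rat (-k3)"
    proof -
      have "of_rat k1 * \<alpha> = - (of_rat k2*\<beta> + of_rat k3*\<gamma>)" using h by (simp add: algebra_simps add_eq_0_iff)
      thus ?thesis using K by (simp add: field_simps of_rat_minus)
    qed
    moreover have "\<beta> = (\<beta> / of_rat k1) * of_rat k1 + (\<gamma> / of_rat k1) * of_rat 0" using K by simp
    moreover have "\<gamma> = (\<beta> / of_rat k1) * of_rat 0 + (\<gamma> / of_rat k1) * of_rat k1" using K by simp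
    ultimately show "\<exists>s t. \<alpha> = s*of_rat (-k2) + t*of_rat (-k3) \<and> \<beta> = s*of_rat k1 + t*of_rat 0 \<and> \<gamma> = s*of_rat 0 + t*of_rat k1"
      by blast
  qed
  show ?thesis
    apply (rule exI[of _ "-k2"], rule exI[of _ k1], rule exI[of _ 0], rule exI[of _ "-k3"], rule exI[of _ 0], rule exI[of _ k1])
    using False iii by (simp add: algebra_simps)
next
  case True
  hence k: "k2 \<noteq> 0" "k3 \<noteq> 0" using assms by auto
  have iii: "\<forall>\<alpha> \<beta> \<gamma> :: complex. of_rat k1*\<alpha> + of_rat k2*\<beta> + of_rat k3*\<gamma> = 0 \<longrightarrow>
       (\<exists>s t. \<alpha> = s*of_rat 1 + t*of_rat 0 \<and> \<beta> = s*of_rat 0 + t*of_rat k3 \<and> \<gamma> = s*of_rat 0 + t*of_rat (-k2))"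
  proof (intro allI impI)
    fix \<alpha> \<beta> \<gamma> :: complex assume h: "of_rat k1*\<alpha> + of_rat k2*\<beta> + of_rat k3*\<gamma> = 0"
    have K: "(of_rat k3 :: complex) \<noteq> 0" using k by simp
    have h2: "of_rat k3 * \<gamma> = - (of_rat k2 * \<beta>)" using h True by (simp add: add_eq_0_iff algebra_simps)
    have "\<gamma> = (\<beta> / of_rat k3) * of_rat (-k2)"
      using h2 K by (simp add: field_simps of_rat_minus)
    moreover have "\<beta> = \<alpha> * of_rat 0 + (\<beta> / of_rat k3) * of_rat k3" using K by simp
    moreover have "\<alpha> = \<alpha> * of_rat 1 + (\<beta> / of_rat k3) * of_rat 0" by simp
    ultimately show "\<exists>s t. \<alpha> = s*of_rat 1 + t*of_rat 0 \<and> \<beta> = s*of_rat 0 + t*of_rat k3 \<and> \<gamma> = s*of_rat 0 + t*of_rat (-k2)"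
      by (intro exI[of _ \<alpha>] exI[of _ "\<beta> / of_rat k3"]) simp
  qed
  show ?thesis
    apply (rule exI[of _ 1], rule exI[of _ 0], rule exI[of _ 0], rule exI[of _ 0], rule exI[of _ k3], rule exI[of _ "-k2"])
    using True k iii by (simp add: algebra_simps)
qed

definition PL :: "(nat \<Rightarrow> rat) set \<Rightarrow> (nat \<Rightarrow> rat) set \<Rightarrow> (nat \<Rightarrow> complex) set" where
  "PL L1 L2 = {(\<lambda>i. a i + b i) | a b. a \<in> cspan L1 \<and> b \<in> cspan L2}"

lemma rv_Q4: "x \<in> Q4 \<Longrightarrow> 4 \<le> i \<Longrightarrow> rv x i = 0"
  unfolding Q4_def rv_def by simp

lemma triangle:
  assumes sm: "smooth_cubic F" and L1: "L1 \<in> rational_lines F" and L2: "L2 \<in> rational_lines F"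
    and ne: "L1 \<noteq> L2" and meet: "\<not> lines_disjoint L1 L2"
  shows "\<exists>L3 \<in> rational_lines F. L3 \<noteq> L1 \<and> L3 \<noteq> L2 \<and> cspan L3 \<subseteq> PL L1 L2 \<and>
     (\<forall>x \<in> PL L1 L2. cubic_eval F x = 0 \<longrightarrow> x \<in> cspan L1 \<or> x \<in> cspan L2 \<or> x \<in> cspan L3) \<and>
     (\<exists>\<eta>. \<forall>x. (\<forall>i. 4 \<le> i \<longrightarrow> x i = 0) \<longrightarrow> (x \<in> PL L1 L2 \<longleftrightarrow> (\<Sum>i<4. \<eta> i * x i) = 0))"
proof -
  from L1 have ql1: "qline L1" and s1: "line_on_surface F L1" unfolding rational_lines_def by auto
  from L2 have ql2: "qline L2" and s2: "line_on_surface F L2" unfolding rational_lines_def by auto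
  obtain p1 q1 where P1: "p1 \<in> Q4" "q1 \<in> Q4" "indep2 p1 q1" "L1 = span2 p1 q1" using ql1 qline_iff by blast
  obtain p2 q2 where P2: "p2 \<in> Q4" "q2 \<in> Q4" "indep2 p2 q2" "L2 = span2 p2 q2" using ql2 qline_iff by blast
  from meet obtain z where z: "z \<in> cspan L1" "z \<in> cspan L2" "z \<noteq> (\<lambda>i. 0)"
    unfolding lines_disjoint_def by blast
  obtain e where e: "e \<in> span2 p1 q1" "e \<in> span2 p2 q2" "e \<noteq> (\<lambda>i. 0)"
    using meet_rat[OF P1(1-3) P2(1-3), of z] z unfolding P1(4) P2(4) cspan_eq by blast
  obtain u where U1: "u \<in> Q4" "e \<in> Q4" "indep2 e u" "span2 p1 q1 = span2 e u"
    using rebase[OF P1(1-3) e(1,3)] by blast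
  obtain v where V1: "v \<in> Q4" "indep2 e v" "span2 p2 q2 = span2 e v"
    using rebase[OF P2(1-3) e(2,3)] by blast
  have L1e: "L1 = span2 e u" and L2e: "L2 = span2 e v" using P1(4) U1(4) P2(4) V1(3) by auto
  define E where "E = rv e"
  define U where "U = rv u"
  define V where "V = rv v"
  have C1: "cspan L1 = span2 E U" unfolding L1e cspan_eq E_def U_def ..
  have C2: "cspan L2 = span2 E V" unfolding L2e cspan_eq E_def V_def ..
  have iEU: "indep2 E U" unfolding E_def U_def by (rule indep2_rv[OF U1(2) U1(1) U1(3)])
  have iEV: "indep2 E V" unfolding E_def V_def by (rule indep2_rv[OF U1(2) V1(1) V1(2)])
  have ZE: "E i = 0" "U i = 0" "V i = 0" if "4 \<le> i" for i
    unfolding E_def U_def V_def using rv_Q4 U1(1,2) V1(1) that by auto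
  have ind3: "\<forall>a b c. (\<forall>i<4. a * E i + b * U i + c * V i = 0) \<longrightarrow> a = 0 \<and> b = 0 \<and> c = 0"
  proof (intro allI impI)
    fix a b c assume h: "\<forall>i<4. a * E i + b * U i + c * V i = 0"
    show "a = 0 \<and> b = 0 \<and> c = 0"
    proof (cases "c = 0")
      case True
      hence "\<forall>i<4. a * E i + b * U i = 0" using h by simp
      thus ?thesis using iEU True unfolding indep2_def by blast
    next
      case c: False
      show ?thesis
      proof (cases "b = 0")
        case True
        hence "\<forall>i<4. a * E i + c * V i = 0" using h by simp
        hence "c = 0" using iEV unfolding indep2_def by blast
        thus ?thesis using c by simp
      next
        case b: False
        have Vm: "V = (\<lambda>i. (-a/c) * E i + (-b/c) * U i)"
        proof
          fix i :: nat
          show "V i = (-a/c) * E i + (-b/c) * U i"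
          proof (cases "i < 4")
            case True
            have hi: "a * E i + b * U i + c * V i = 0" using h True by blast
            have "c * V i = (a * E i + b * U i + c * V i) - (a * E i + b * U i)" by (simp add: algebra_simps)
            hence "c * V i = - (a * E i + b * U i)" using hi by simp
            thus ?thesis using c by (simp add: field_simps)
          next
            case False thus ?thesis using ZE by simp
          qed
        qed
        have Um: "U = (\<lambda>i. (-a/b) * E i + (-c/b) * V i)"
        proof
          fix i :: nat
          show "U i = (-a/b) * E i + (-c/b) * V i"
          proof (cases "i < 4")
            case True
            have hi: "a * E i + b * U i + c * V i = 0" using h True by blast
            have "b * U i = (a * E i + b * U i + c * V i) - (a * E i + c * V i)" by (simp add: algebra_simps)
            hence "b * U i = - (a * E i + c * V i)" using hi by simp
            thus ?thesis using b by (simp add: field_simps)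
          next
            case False thus ?thesis using ZE by simp
          qed
        qed
        have "V \<in> span2 E U" unfolding Vm by (rule span2_I)
        hence "span2 E V \<subseteq> span2 E U" using span2_sub span2_base(1) by metis
        moreover have "U \<in> span2 E V" unfolding Um by (rule span2_I)
        hence "span2 E U \<subseteq> span2 E V" using span2_sub span2_base(1) by metis
        ultimately have "cspan L1 = cspan L2" unfolding C1 C2 by blast
        hence "L1 = L2" using cspan_inj[OF ql1 ql2] by simp
        thus ?thesis using ne by simp
      qed
    qed
  qed
  have ind3q: "\<forall>a b c::rat. (\<forall>i<4. a * e i + b * u i + c * v i = 0) \<longrightarrow> a = 0 \<and> b = 0 \<and> c = 0"
  proof (intro allI impI)
    fix a b c :: rat assume h: "\<forall>i<4. a * e i + b * u i + c * v i = 0"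
    have "\<forall>i<4. of_rat a * E i + of_rat b * U i + of_rat c * V i = 0"
    proof (intro allI impI)
      fix i :: nat assume "i < 4"
      hence "(of_rat (a * e i + b * u i + c * v i) :: complex) = 0" using h by simp
      thus "of_rat a * E i + of_rat b * U i + of_rat c * V i = 0"
        unfolding E_def U_def V_def rv_def by (simp add: of_rat_add of_rat_mult)
    qed
    hence "(of_rat a :: complex) = 0 \<and> (of_rat b :: complex) = 0 \<and> (of_rat c :: complex) = 0" using ind3 by blast
    thus "a = 0 \<and> b = 0 \<and> c = 0" by simp
  qed
  obtain w where W: "w \<in> Q4" "det4 (col4 e u v w) \<noteq> 0" using complete_w[OF U1(2) U1(1) V1(1) ind3q] by blast
  define W where "W = rv w"
  have dC: "det4 (col4 E U V W) \<noteq> 0" unfolding E_def U_def V_def W_def det4_rv using W(2) by simp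
  note fr1 = frame_C(1)[OF dC] and fr2 = frame_C(2)[OF dC]
  have onL1: "\<forall>x\<in>span2 E U. cubic_eval F x = 0" using s1 C1 unfolding line_on_surface_def by auto
  have onL2: "\<forall>x\<in>span2 E V. cubic_eval F x = 0" using s2 C2 unfolding line_on_surface_def by auto
  note t1 = line_tri[OF onL1] and t2 = line_tri[OF onL2]
  define k1 where "k1 = 6 * tri F e u v"
  define k2 where "k2 = 3 * tri F u u v"
  define k3 where "k3 = 3 * tri F u v v"
  have KK: "of_rat k1 = 6 * tri F E U V" "of_rat k2 = 3 * tri F U U V" "of_rat k3 = 3 * tri F U V V"
    unfolding k1_def k2_def k3_def E_def U_def V_def rv_def tri_rat by (simp_all add: of_rat_mult)
  have g: "cubic_eval F (\<lambda>i. \<alpha> * E i + \<beta> * U i + \<gamma> * V i) = \<beta> * \<gamma> * (of_rat k1 * \<alpha> + of_rat k2 * \<beta> + of_rat k3 * \<gamma>)" for \<alpha> \<beta> \<gamma>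
    unfolding eval_tri tri_cube3 KK using t1 t2 by (simp add: algebra_simps power2_eq_square power3_eq_cube)
  have nd: "k1 \<noteq> 0 \<or> (k2 \<noteq> 0 \<and> k3 \<noteq> 0)"
  proof (rule ccontr)
    assume "\<not> ?thesis"
    hence k10: "k1 = 0" and k23: "k2 = 0 \<or> k3 = 0" by auto
    have T0: "tri F E U V = 0" using KK(1) k10 by simp
    have iEU': "\<forall>a b. (\<forall>i<4. a * E i + b * U i = 0) \<longrightarrow> a = 0 \<and> b = 0" using iEU unfolding indep2_def .
    have iEV': "\<forall>a b. (\<forall>i<4. a * E i + b * V i = 0) \<longrightarrow> a = 0 \<and> b = 0" using iEV unfolding indep2_def .
    from k23 show False
    proof
      assume "k2 = 0"
      hence T2: "tri F U U V = 0" using KK(2) by simp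
      have "\<not> smooth_cubic F"
        by (rule sing[OF fr2 iEU']) (use t1 t2 T0 T2 in simp_all)
      thus False using sm by simp
    next
      assume "k3 = 0"
      hence T3: "tri F U V V = 0" using KK(3) by simp
      have fr2': "\<forall>y. \<exists>a b c d. \<forall>i<4. y i = a * E i + b * V i + c * U i + d * W i"
      proof
        fix y
        obtain a b c d where "\<forall>i<4. y i = a * E i + b * U i + c * V i + d * W i" using fr2 by blast
        hence "\<forall>i<4. y i = a * E i + c * V i + b * U i + d * W i" by (simp add: algebra_simps)
        thus "\<exists>a b c d. \<forall>i<4. y i = a * E i + b * V i + c * U i + d * W i" by blast
      qed
      have s1': "tri F E V U = tri F E U V" by (rule tri_sym2)
      have s2': "tri F V V U = tri F U V V" using tri_sym2[of F V V U] tri_sym1[of F V U V] by simp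
      have "\<not> smooth_cubic F"
        by (rule sing[OF fr2' iEV']) (use t1 t2 T0 T3 s1' s2' in simp_all)
      thus False using sm by simp
    qed
  qed
  obtain a1 b1 c1 a2 b2 c2 where LQ:
    "k1*a1 + k2*b1 + k3*c1 = 0" "k1*a2 + k2*b2 + k3*c2 = 0"
    "\<forall>s t :: rat. s*a1 + t*a2 = 0 \<and> s*b1 + t*b2 = 0 \<and> s*c1 + t*c2 = 0 \<longrightarrow> s = 0 \<and> t = 0"
    "\<forall>\<alpha> \<beta> \<gamma> :: complex. of_rat k1*\<alpha> + of_rat k2*\<beta> + of_rat k3*\<gamma> = 0 \<longrightarrow>
       (\<exists>s t. \<alpha> = s*of_rat a1 + t*of_rat a2 \<and> \<beta> = s*of_rat b1 + t*of_rat b2 \<and> \<gamma> = s*of_rat c1 + t*of_rat c2)"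
    "c1 \<noteq> 0 \<or> c2 \<noteq> 0" "b1 \<noteq> 0 \<or> b2 \<noteq> 0"
    using lineq[OF nd] by blast
  define p3 where "p3 = (\<lambda>i. a1 * e i + b1 * u i + c1 * v i)"
  define q3 where "q3 = (\<lambda>i. a2 * e i + b2 * u i + c2 * v i)"
  define L3 where "L3 = span2 p3 q3"
  have p3Q: "p3 \<in> Q4" "q3 \<in> Q4" using U1(1,2) V1(1) unfolding p3_def q3_def Q4_def by auto
  have i3: "indep2 p3 q3" unfolding indep2_def
  proof (intro allI impI)
    fix s t assume h: "\<forall>i<4. s * p3 i + t * q3 i = 0"
    have "\<forall>i<4. (s*a1 + t*a2) * e i + (s*b1 + t*b2) * u i + (s*c1 + t*c2) * v i = 0"
    proof (intro allI impI)
      fix i :: nat assume "i < 4"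
      hence "s * p3 i + t * q3 i = 0" using h by blast
      thus "(s*a1 + t*a2) * e i + (s*b1 + t*b2) * u i + (s*c1 + t*c2) * v i = 0"
        unfolding p3_def q3_def by (simp add: algebra_simps)
    qed
    hence "s*a1 + t*a2 = 0 \<and> s*b1 + t*b2 = 0 \<and> s*c1 + t*c2 = 0" using ind3q by blast
    thus "s = 0 \<and> t = 0" using LQ(3) by blast
  qed
  have qL3: "qline L3" unfolding qline_iff L3_def using p3Q i3 by blast
  define A1 where "A1 = (of_rat a1 :: complex)"
  define B1 where "B1 = (of_rat b1 :: complex)"
  define C1' where "C1' = (of_rat c1 :: complex)"
  define A2 where "A2 = (of_rat a2 :: complex)"
  define B2 where "B2 = (of_rat b2 :: complex)"
  define C2' where "C2' = (of_rat c2 :: complex)"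
  have P3e: "rv p3 = (\<lambda>i. A1 * E i + B1 * U i + C1' * V i)"
    unfolding p3_def rv_def A1_def B1_def C1'_def E_def U_def V_def by (simp add: of_rat_add of_rat_mult)
  have Q3e: "rv q3 = (\<lambda>i. A2 * E i + B2 * U i + C2' * V i)"
    unfolding q3_def rv_def A2_def B2_def C2'_def E_def U_def V_def by (simp add: of_rat_add of_rat_mult)
  have C3: "cspan L3 = span2 (rv p3) (rv q3)" unfolding L3_def cspan_eq ..
  have lz1: "of_rat k1 * A1 + of_rat k2 * B1 + of_rat k3 * C1' = 0"
    using arg_cong[OF LQ(1), of "of_rat :: rat \<Rightarrow> complex"] unfolding A1_def B1_def C1'_def
    by (simp add: of_rat_add of_rat_mult)
  have lz2: "of_rat k1 * A2 + of_rat k2 * B2 + of_rat k3 * C2' = 0"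
    using arg_cong[OF LQ(2), of "of_rat :: rat \<Rightarrow> complex"] unfolding A2_def B2_def C2'_def
    by (simp add: of_rat_add of_rat_mult)
  have mem3: "\<exists>\<alpha> \<beta> \<gamma>. x = (\<lambda>i. \<alpha> * E i + \<beta> * U i + \<gamma> * V i) \<and> of_rat k1 * \<alpha> + of_rat k2 * \<beta> + of_rat k3 * \<gamma> = 0"
    if x: "x \<in> cspan L3" for x
  proof -
    obtain s t where xs: "x = (\<lambda>i. s * rv p3 i + t * rv q3 i)" using x unfolding C3 by (rule span2_E)
    have "x = (\<lambda>i. (s*A1 + t*A2) * E i + (s*B1 + t*B2) * U i + (s*C1' + t*C2') * V i)"
      unfolding xs P3e Q3e by (simp add: algebra_simps)
    moreover have "of_rat k1 * (s*A1 + t*A2) + of_rat k2 * (s*B1 + t*B2) + of_rat k3 * (s*C1' + t*C2') =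
        s * (of_rat k1 * A1 + of_rat k2 * B1 + of_rat k3 * C1') + t * (of_rat k1 * A2 + of_rat k2 * B2 + of_rat k3 * C2')"
      by (simp add: algebra_simps)
    ultimately show ?thesis using lz1 lz2 by auto
  qed
  have onL3: "line_on_surface F L3" unfolding line_on_surface_def
  proof
    fix x assume "x \<in> cspan L3"
    then obtain \<alpha> \<beta> \<gamma> where "x = (\<lambda>i. \<alpha> * E i + \<beta> * U i + \<gamma> * V i)"
      "of_rat k1 * \<alpha> + of_rat k2 * \<beta> + of_rat k3 * \<gamma> = 0" using mem3 by blast
    thus "cubic_eval F x = 0" using g by simp
  qed
  have L3r: "L3 \<in> rational_lines F" unfolding rational_lines_def using qL3 onL3 by blast
  have inP: "(\<lambda>i. \<alpha> * E i + \<beta> * U i + \<gamma> * V i) \<in> PL L1 L2" for \<alpha> \<beta> \<gamma>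
  proof -
    have a: "(\<lambda>i. \<alpha> * E i + \<beta> * U i) \<in> cspan L1" unfolding C1 by (rule span2_I)
    have b: "(\<lambda>i. 0 * E i + \<gamma> * V i) \<in> cspan L2" unfolding C2 by (rule span2_I)
    show ?thesis unfolding PL_def
      by (rule CollectI, rule exI[of _ "\<lambda>i. \<alpha> * E i + \<beta> * U i"], rule exI[of _ "\<lambda>i. 0 * E i + \<gamma> * V i"])
        (use a b in \<open>simp add: algebra_simps\<close>)
  qed
  have gen: "\<exists>\<alpha> \<beta> \<gamma>. x = (\<lambda>i. \<alpha> * E i + \<beta> * U i + \<gamma> * V i)" if x: "x \<in> PL L1 L2" for x
  proof -
    obtain a b where ab: "x = (\<lambda>i. a i + b i)" "a \<in> cspan L1" "b \<in> cspan L2" using x unfolding PL_def by blast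
    obtain s t where a: "a = (\<lambda>i. s * E i + t * U i)" using ab(2) unfolding C1 by (rule span2_E)
    obtain s' t' where b: "b = (\<lambda>i. s' * E i + t' * V i)" using ab(3) unfolding C2 by (rule span2_E)
    have "x = (\<lambda>i. (s + s') * E i + t * U i + t' * V i)" unfolding ab(1) a b by (simp add: algebra_simps)
    thus ?thesis by blast
  qed
  have c0: "\<gamma> = 0" if xin: "(\<lambda>i. \<alpha> * E i + \<beta> * U i + \<gamma> * V i) \<in> span2 E U" for \<alpha> \<beta> \<gamma>
  proof -
    obtain s t where st: "(\<lambda>i. \<alpha> * E i + \<beta> * U i + \<gamma> * V i) = (\<lambda>i. s * E i + t * U i)" using xin by (rule span2_E)
    have "\<forall>i<4. (\<alpha> - s) * E i + (\<beta> - t) * U i + \<gamma> * V i = 0"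
    proof (intro allI impI)
      fix i :: nat
      have "\<alpha> * E i + \<beta> * U i + \<gamma> * V i = s * E i + t * U i" using fun_cong[OF st, of i] by simp
      thus "(\<alpha> - s) * E i + (\<beta> - t) * U i + \<gamma> * V i = 0" by (simp add: algebra_simps)
    qed
    thus ?thesis using ind3 by blast
  qed
  have b0: "\<beta> = 0" if xin: "(\<lambda>i. \<alpha> * E i + \<beta> * U i + \<gamma> * V i) \<in> span2 E V" for \<alpha> \<beta> \<gamma>
  proof -
    obtain s t where st: "(\<lambda>i. \<alpha> * E i + \<beta> * U i + \<gamma> * V i) = (\<lambda>i. s * E i + t * V i)" using xin by (rule span2_E)
    have "\<forall>i<4. (\<alpha> - s) * E i + \<beta> * U i + (\<gamma> - t) * V i = 0"
    proof (intro allI impI)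
      fix i :: nat
      have "\<alpha> * E i + \<beta> * U i + \<gamma> * V i = s * E i + t * V i" using fun_cong[OF st, of i] by simp
      thus "(\<alpha> - s) * E i + \<beta> * U i + (\<gamma> - t) * V i = 0" by (simp add: algebra_simps)
    qed
    thus ?thesis using ind3 by blast
  qed
  have P3m: "rv p3 \<in> cspan L3" "rv q3 \<in> cspan L3" unfolding C3 using span2_base by auto
  have n1: "L3 \<noteq> L1"
  proof
    assume "L3 = L1"
    hence "rv p3 \<in> span2 E U" "rv q3 \<in> span2 E U" using P3m C1 by auto
    hence "C1' = 0" "C2' = 0" using c0 unfolding P3e Q3e by blast+
    thus False using LQ(5) unfolding C1'_def C2'_def by simp
  qed
  have n2: "L3 \<noteq> L2"
  proof
    assume "L3 = L2"
    hence "rv p3 \<in> span2 E V" "rv q3 \<in> span2 E V" using P3m C2 by auto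
    hence "B1 = 0" "B2 = 0" using b0 unfolding P3e Q3e by blast+
    thus False using LQ(6) unfolding B1_def B2_def by simp
  qed
  have sub3: "cspan L3 \<subseteq> PL L1 L2"
  proof
    fix x assume "x \<in> cspan L3"
    then obtain \<alpha> \<beta> \<gamma> where "x = (\<lambda>i. \<alpha> * E i + \<beta> * U i + \<gamma> * V i)" using mem3 by blast
    thus "x \<in> PL L1 L2" using inP by simp
  qed
  have sect: "\<forall>x \<in> PL L1 L2. cubic_eval F x = 0 \<longrightarrow> x \<in> cspan L1 \<or> x \<in> cspan L2 \<or> x \<in> cspan L3"
  proof (intro ballI impI)
    fix x assume x: "x \<in> PL L1 L2" and f0: "cubic_eval F x = 0"
    obtain \<alpha> \<beta> \<gamma> where xe: "x = (\<lambda>i. \<alpha> * E i + \<beta> * U i + \<gamma> * V i)" using gen[OF x] by blast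
    have "\<beta> * \<gamma> * (of_rat k1 * \<alpha> + of_rat k2 * \<beta> + of_rat k3 * \<gamma>) = 0" using f0 g xe by simp
    hence "\<beta> = 0 \<or> \<gamma> = 0 \<or> of_rat k1 * \<alpha> + of_rat k2 * \<beta> + of_rat k3 * \<gamma> = 0" by simp
    moreover {
      assume "\<beta> = 0"
      hence "x = (\<lambda>i. \<alpha> * E i + \<gamma> * V i)" using xe by simp
      hence "x \<in> cspan L2" unfolding C2 using span2_I by metis
    }
    moreover {
      assume "\<gamma> = 0"
      hence "x = (\<lambda>i. \<alpha> * E i + \<beta> * U i)" using xe by simp
      hence "x \<in> cspan L1" unfolding C1 using span2_I by metis
    }
    moreover {
      assume "of_rat k1 * \<alpha> + of_rat k2 * \<beta> + of_rat k3 * \<gamma> = 0"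
      then obtain s t where st: "\<alpha> = s*A1 + t*A2" "\<beta> = s*B1 + t*B2" "\<gamma> = s*C1' + t*C2'"
        using LQ(4) unfolding A1_def A2_def B1_def B2_def C1'_def C2'_def by blast
      have "x = (\<lambda>i. s * rv p3 i + t * rv q3 i)" unfolding xe P3e Q3e st by (simp add: algebra_simps)
      hence "x \<in> cspan L3" unfolding C3 using span2_I by metis
    }
    ultimately show "x \<in> cspan L1 \<or> x \<in> cspan L2 \<or> x \<in> cspan L3" by blast
  qed
  have eta: "\<exists>\<eta>. \<forall>x. (\<forall>i. 4 \<le> i \<longrightarrow> x i = 0) \<longrightarrow> (x \<in> PL L1 L2 \<longleftrightarrow> (\<Sum>i<4. \<eta> i * x i) = 0)"
  proof -
    have "\<forall>k. \<exists>c. \<forall>i<4. (if i = k then 1 else 0) = fst c * E i + fst (snd c) * U i + fst (snd (snd c)) * V i + snd (snd (snd c)) * W i"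
    proof
      fix k :: nat
      obtain a b c d where "\<forall>i<4. (if i = k then 1 else 0) = a * E i + b * U i + c * V i + d * W i"
        using fr2[rule_format, of "\<lambda>i. if i = k then 1 else 0"] by blast
      thus "\<exists>c. \<forall>i<4. (if i = k then 1 else 0) = fst c * E i + fst (snd c) * U i + fst (snd (snd c)) * V i + snd (snd (snd c)) * W i"
        by (intro exI[of _ "(a,b,c,d)"]) simp
    qed
    then obtain f where f: "\<And>k i. i < 4 \<Longrightarrow> (if i = k then 1 else 0) = fst (f k) * E i + fst (snd (f k)) * U i + fst (snd (snd (f k))) * V i + snd (snd (snd (f k))) * W i"
      by metis
    define \<eta> where "\<eta> k = snd (snd (snd (f k)))" for k
    have dec: "x i = (\<Sum>k<4. x k * fst (f k)) * E i + (\<Sum>k<4. x k * fst (snd (f k))) * U i + (\<Sum>k<4. x k * fst (snd (snd (f k)))) * V i + (\<Sum>k<4. \<eta> k * x k) * W i"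
      if i: "i < 4" for x :: "nat \<Rightarrow> complex" and i
    proof -
      have "x i = (\<Sum>k<4. x k * (if i = k then 1 else 0))" using l4[OF i] by (auto simp: sum4)
      also have "\<dots> = (\<Sum>k<4. x k * (fst (f k) * E i + fst (snd (f k)) * U i + fst (snd (snd (f k))) * V i + snd (snd (snd (f k))) * W i))"
        using f[OF i] by simp
      also have "\<dots> = (\<Sum>k<4. x k * fst (f k)) * E i + (\<Sum>k<4. x k * fst (snd (f k))) * U i + (\<Sum>k<4. x k * fst (snd (snd (f k)))) * V i + (\<Sum>k<4. \<eta> k * x k) * W i"
        unfolding \<eta>_def by (simp add: sum4 algebra_simps)
      finally show ?thesis .
    qed
    have "\<forall>x. (\<forall>i. 4 \<le> i \<longrightarrow> x i = 0) \<longrightarrow> (x \<in> PL L1 L2 \<longleftrightarrow> (\<Sum>i<4. \<eta> i * x i) = 0)"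
    proof (intro allI impI)
      fix x :: "nat \<Rightarrow> complex" assume z4: "\<forall>i. 4 \<le> i \<longrightarrow> x i = 0"
      define \<alpha> where "\<alpha> = (\<Sum>k<4. x k * fst (f k))"
      define \<beta> where "\<beta> = (\<Sum>k<4. x k * fst (snd (f k)))"
      define \<gamma> where "\<gamma> = (\<Sum>k<4. x k * fst (snd (snd (f k))))"
      define \<delta> where "\<delta> = (\<Sum>k<4. \<eta> k * x k)"
      have d4: "x i = \<alpha> * E i + \<beta> * U i + \<gamma> * V i + \<delta> * W i" if "i < 4" for i
        using dec[OF that, of x] unfolding \<alpha>_def \<beta>_def \<gamma>_def \<delta>_def .
      show "x \<in> PL L1 L2 \<longleftrightarrow> \<delta> = 0" unfolding \<delta>_def[symmetric]
      proof
        assume "x \<in> PL L1 L2"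
        then obtain \<alpha>' \<beta>' \<gamma>' where xe: "x = (\<lambda>i. \<alpha>' * E i + \<beta>' * U i + \<gamma>' * V i)" using gen by blast
        have "\<forall>i<4. (\<alpha> - \<alpha>') * E i + (\<beta> - \<beta>') * U i + (\<gamma> - \<gamma>') * V i + \<delta> * W i = 0"
        proof (intro allI impI)
          fix i :: nat assume i: "i < 4"
          have "\<alpha>' * E i + \<beta>' * U i + \<gamma>' * V i = \<alpha> * E i + \<beta> * U i + \<gamma> * V i + \<delta> * W i"
            using d4[OF i] xe by simp
          thus "(\<alpha> - \<alpha>') * E i + (\<beta> - \<beta>') * U i + (\<gamma> - \<gamma>') * V i + \<delta> * W i = 0"
            by (simp add: algebra_simps)
        qed
        thus "\<delta> = 0" using fr1 by blast
      next
        assume d0: "\<delta> = 0"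
        have "x = (\<lambda>i. \<alpha> * E i + \<beta> * U i + \<gamma> * V i)"
        proof
          fix i :: nat
          show "x i = \<alpha> * E i + \<beta> * U i + \<gamma> * V i"
          proof (cases "i < 4")
            case True thus ?thesis using d4[OF True] d0 by simp
          next
            case False thus ?thesis using z4 ZE by simp
          qed
        qed
        thus "x \<in> PL L1 L2" using inP by simp
      qed
    qed
    thus ?thesis by blast
  qed
  show ?thesis using L3r n1 n2 sub3 sect eta by blast
qed

lemma card4:
  assumes "card S = 4"
  shows "\<exists>a b c d. S = {a,b,c,d} \<and> a \<noteq> b \<and> a \<noteq> c \<and> a \<noteq> d \<and> b \<noteq> c \<and> b \<noteq> d \<and> c \<noteq> d"
proof -
  have "card S = Suc (Suc (Suc (Suc 0)))" using assms by simp
  thus ?thesis by (auto simp: card_Suc_eq)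
qed

lemma pig:
  assumes "\<forall>k<(4::nat). X k \<in> A \<or> X k \<in> B \<or> X k \<in> C"
  shows "\<exists>k l. k < 4 \<and> l < 4 \<and> k \<noteq> l \<and> ((X k \<in> A \<and> X l \<in> A) \<or> (X k \<in> B \<and> X l \<in> B) \<or> (X k \<in> C \<and> X l \<in> C))"
proof -
  have h: "X 0 \<in> A \<or> X 0 \<in> B \<or> X 0 \<in> C" "X 1 \<in> A \<or> X 1 \<in> B \<or> X 1 \<in> C"
     "X 2 \<in> A \<or> X 2 \<in> B \<or> X 2 \<in> C" "X 3 \<in> A \<or> X 3 \<in> B \<or> X 3 \<in> C" using assms by auto
  have n: "(0::nat) < 4" "(1::nat) < 4" "(2::nat) < 4" "(3::nat) < 4" "(0::nat) \<noteq> 1" "(0::nat) \<noteq> 2" "(0::nat) \<noteq> 3"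
    "(1::nat) \<noteq> 2" "(1::nat) \<noteq> 3" "(2::nat) \<noteq> 3" by auto
  show ?thesis using h n by blast
qed

lemma cspan_qline:
  assumes "qline L"
  obtains p q where "p \<in> Q4" "q \<in> Q4" "indep2 p q" "L = span2 p q" "cspan L = span2 (rv p) (rv q)"
  using assms qline_iff cspan_eq by metis

lemma cspan_zero4: "qline L \<Longrightarrow> x \<in> cspan L \<Longrightarrow> 4 \<le> i \<Longrightarrow> x i = 0"
proof -
  assume "qline L" "x \<in> cspan L" "4 \<le> i"
  then obtain p q where pq: "p \<in> Q4" "q \<in> Q4" "cspan L = span2 (rv p) (rv q)" by (metis cspan_qline)
  then obtain s t where "x = (\<lambda>i. s * rv p i + t * rv q i)" using \<open>x \<in> cspan L\<close> by (metis span2_E)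
  thus "x i = 0" using rv_Q4 pq \<open>4 \<le> i\<close> by simp
qed

lemma cspan_closed: "qline L \<Longrightarrow> x \<in> cspan L \<Longrightarrow> y \<in> cspan L \<Longrightarrow> (\<lambda>i. s * x i + t * y i) \<in> cspan L"
  by (metis cspan_qline span2_closed)

lemma two_in:
  assumes "qline L" and k: "(\<lambda>i. P i + of_nat k * Q i) \<in> cspan L" and l: "(\<lambda>i. P i + of_nat l * Q i) \<in> cspan L" and "k \<noteq> l"
  shows "span2 P Q \<subseteq> cspan L"
proof -
  define c where "c = (of_nat l - of_nat k :: complex)"
  have c: "c \<noteq> 0" using assms(4) unfolding c_def by simp
  have "Q = (\<lambda>i. (1/c) * (P i + of_nat l * Q i) + (-1/c) * (P i + of_nat k * Q i))"
  proof
    fix i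
    have "(1/c) * (P i + of_nat l * Q i) + (-1/c) * (P i + of_nat k * Q i) = (1/c) * ((of_nat l - of_nat k) * Q i)"
      by (simp add: algebra_simps)
    also have "\<dots> = Q i" unfolding c_def[symmetric] using c by simp
    finally show "Q i = (1/c) * (P i + of_nat l * Q i) + (-1/c) * (P i + of_nat k * Q i)" by simp
  qed
  hence Qm: "Q \<in> cspan L" using cspan_closed[OF assms(1) l k] by metis
  have "P = (\<lambda>i. 1 * (P i + of_nat k * Q i) + (- of_nat k) * Q i)" by (simp add: algebra_simps)
  hence Pm: "P \<in> cspan L" using cspan_closed[OF assms(1) k Qm] by metis
  obtain p q where "cspan L = span2 (rv p) (rv q)" using assms(1) by (metis cspan_qline)
  thus ?thesis using span2_sub Pm Qm by metis
qed

theorem corollary4p12: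
  fixes F :: cubic_form
  assumes "smooth_cubic F"
    and "\<not> (\<exists>L1 L2 L3. L1 \<in> rational_lines F \<and> L2 \<in> rational_lines F \<and> L3 \<in> rational_lines F \<and>
             lines_disjoint L1 L2 \<and> lines_disjoint L1 L3 \<and> lines_disjoint L2 L3)"
  shows "card (rational_lines F) \<noteq> 4"
proof
  assume c4: "card (rational_lines F) = 4"
  define S where "S = rational_lines F"
  have sm: "smooth_cubic F" using assms(1) .
  have qS: "qline L" "line_on_surface F L" if "L \<in> S" for L using that unfolding S_def rational_lines_def by auto
  have fin: "finite S" using c4 S_def by (metis card.infinite zero_neq_numeral)
  have "\<exists>L1 L2. L1 \<in> S \<and> L2 \<in> S \<and> L1 \<noteq> L2 \<and> \<not> lines_disjoint L1 L2"
  proof (rule ccontr)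
    assume H: "\<not> ?thesis"
    obtain a b c d where abcd: "S = {a,b,c,d}" "a \<noteq> b" "a \<noteq> c" "b \<noteq> c"
      using card4[OF c4[folded S_def]] by blast
    have "lines_disjoint a b" "lines_disjoint a c" "lines_disjoint b c" using H abcd by auto
    moreover have "a \<in> S" "b \<in> S" "c \<in> S" using abcd by auto
    ultimately show False using assms(2) unfolding S_def by blast
  qed
  then obtain L1 L2 where L12: "L1 \<in> S" "L2 \<in> S" "L1 \<noteq> L2" "\<not> lines_disjoint L1 L2" by blast
  obtain L3 where L3: "L3 \<in> S" "L3 \<noteq> L1" "L3 \<noteq> L2" "cspan L3 \<subseteq> PL L1 L2"
    and sect: "\<forall>x \<in> PL L1 L2. cubic_eval F x = 0 \<longrightarrow> x \<in> cspan L1 \<or> x \<in> cspan L2 \<or> x \<in> cspan L3"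
    and "\<exists>\<eta>. \<forall>x. (\<forall>i. 4 \<le> i \<longrightarrow> x i = 0) \<longrightarrow> (x \<in> PL L1 L2 \<longleftrightarrow> (\<Sum>i<4. \<eta> i * x i) = 0)"
    using triangle[OF sm L12(1,2)[unfolded S_def] L12(3,4)] unfolding S_def by blast
  then obtain \<eta> where eta: "\<And>x. (\<forall>i. 4 \<le> i \<longrightarrow> x i = 0) \<Longrightarrow> (x \<in> PL L1 L2 \<longleftrightarrow> (\<Sum>i<4. \<eta> i * x i) = 0)"
    by blast
  define h where "h x = (\<Sum>i<4. \<eta> i * x i)" for x :: "nat \<Rightarrow> complex"
  have hlin: "h (\<lambda>i. s * X i + t * Y i) = s * h X + t * h Y" for s t X Y
    unfolding h_def by (simp add: sum4 algebra_simps)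
  have hdiff: "h (\<lambda>i. X i - Y i) = h X - h Y" for X Y
    unfolding h_def by (simp add: sum4 algebra_simps)
  have sub12: "cspan L1 \<subseteq> PL L1 L2" "cspan L2 \<subseteq> PL L1 L2"
  proof -
    obtain p q where "cspan L2 = span2 (rv p) (rv q)" using qS(1)[OF L12(2)] by (metis cspan_qline)
    hence z2: "(\<lambda>i. 0) \<in> cspan L2" using span2_zero by metis
    obtain p q where "cspan L1 = span2 (rv p) (rv q)" using qS(1)[OF L12(1)] by (metis cspan_qline)
    hence z1: "(\<lambda>i. 0) \<in> cspan L1" using span2_zero by metis
    show "cspan L1 \<subseteq> PL L1 L2"
    proof
      fix x assume x: "x \<in> cspan L1"
      show "x \<in> PL L1 L2" unfolding PL_def
        by (rule CollectI, rule exI[of _ x], rule exI[of _ "\<lambda>i. 0"]) (use x z2 in simp)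
    qed
    show "cspan L2 \<subseteq> PL L1 L2"
    proof
      fix x assume x: "x \<in> cspan L2"
      show "x \<in> PL L1 L2" unfolding PL_def
        by (rule CollectI, rule exI[of _ "\<lambda>i. 0"], rule exI[of _ x]) (use x z1 in simp)
    qed
  qed
  have Tri: "{L1, L2, L3} \<subseteq> S" using L12 L3 by auto
  have "card {L1, L2, L3} \<le> 3" by (auto simp: card_insert_if)
  hence "\<not> S \<subseteq> {L1, L2, L3}" using c4[folded S_def] card_mono[of "{L1,L2,L3}" S] by auto
  then obtain d where d: "d \<in> S" "d \<noteq> L1" "d \<noteq> L2" "d \<noteq> L3" by blast
  have S4: "S = {L1, L2, L3, d}"
  proof (rule card_seteq[symmetric])
    show "finite S" by (rule fin)
    show "{L1, L2, L3, d} \<subseteq> S" using Tri d by auto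
    show "card S \<le> card {L1, L2, L3, d}" using c4[folded S_def] L12(3) L3(2,3) d(2-4) by auto
  qed
  have inP: "x \<in> PL L1 L2" if "L \<in> {L1, L2, L3}" "x \<in> cspan L" for L x
    using that sub12 L3(4) by auto
  have qL: "qline L" if "L \<in> {L1, L2, L3}" for L using that qS Tri by auto
  have hP: "h x = 0" if "L \<in> {L1, L2, L3}" "x \<in> cspan L" for L x
  proof -
    have "\<forall>i. 4 \<le> i \<longrightarrow> x i = 0" using cspan_zero4[OF qL[OF that(1)] that(2)] by blast
    thus ?thesis using eta inP[OF that] unfolding h_def by blast
  qed
  obtain p q where pq: "p \<in> Q4" "q \<in> Q4" "indep2 p q" "d = span2 p q" "cspan d = span2 (rv p) (rv q)"
    using qS(1)[OF d(1)] by (rule cspan_qline)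
  define P where "P = rv p"
  define Q where "Q = rv q"
  have Cd: "cspan d = span2 P Q" unfolding P_def Q_def pq(5) ..
  have iPQ: "indep2 P Q" unfolding P_def Q_def by (rule indep2_rv[OF pq(1-3)])
  have onD: "cubic_eval F x = 0" if "x \<in> span2 P Q" for x
    using qS(2)[OF d(1)] that Cd unfolding line_on_surface_def by auto
  have z4: "\<forall>i. 4 \<le> i \<longrightarrow> (\<lambda>i. s * P i + t * Q i) i = 0" for s t
    using rv_Q4 pq(1,2) unfolding P_def Q_def by simp
  have inPd: "(\<lambda>i. s * P i + t * Q i) \<in> PL L1 L2 \<longleftrightarrow> s * h P + t * h Q = 0" for s t
    using eta[OF z4[of s t]] hlin unfolding h_def by simp
  have dneq: "d \<noteq> L" if "L \<in> {L1, L2, L3}" for L using that d by auto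
  show False
  proof (cases "h P = 0 \<and> h Q = 0")
    case True
    have all: "\<forall>k<(4::nat). (\<lambda>i. P i + of_nat k * Q i) \<in> cspan L1 \<or> (\<lambda>i. P i + of_nat k * Q i) \<in> cspan L2 \<or> (\<lambda>i. P i + of_nat k * Q i) \<in> cspan L3"
    proof (intro allI impI)
      fix k :: nat
      have e: "(\<lambda>i. P i + of_nat k * Q i) = (\<lambda>i. 1 * P i + of_nat k * Q i)" by simp
      have "(\<lambda>i. 1 * P i + of_nat k * Q i) \<in> PL L1 L2" using inPd[of 1 "of_nat k"] True by simp
      moreover have "cubic_eval F (\<lambda>i. 1 * P i + of_nat k * Q i) = 0" using onD span2_I by metis
      ultimately show "(\<lambda>i. P i + of_nat k * Q i) \<in> cspan L1 \<or> (\<lambda>i. P i + of_nat k * Q i) \<in> cspan L2 \<or> (\<lambda>i. P i + of_nat k * Q i) \<in> cspan L3"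
        using sect e by metis
    qed
    obtain k l where kl: "k \<noteq> l" and
      "((\<lambda>i. P i + of_nat k * Q i) \<in> cspan L1 \<and> (\<lambda>i. P i + of_nat l * Q i) \<in> cspan L1) \<or>
       ((\<lambda>i. P i + of_nat k * Q i) \<in> cspan L2 \<and> (\<lambda>i. P i + of_nat l * Q i) \<in> cspan L2) \<or>
       ((\<lambda>i. P i + of_nat k * Q i) \<in> cspan L3 \<and> (\<lambda>i. P i + of_nat l * Q i) \<in> cspan L3)"
      using pig[OF all] by blast
    then obtain L where L: "L \<in> {L1, L2, L3}" "(\<lambda>i. P i + of_nat k * Q i) \<in> cspan L" "(\<lambda>i. P i + of_nat l * Q i) \<in> cspan L"
      by blast
    have "cspan d \<subseteq> cspan L" unfolding Cd using two_in[OF qL[OF L(1)] L(2,3) kl] .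
    hence "d = L" using cspan_inj[OF qS(1)[OF d(1)] qL[OF L(1)]] by simp
    thus False using dneq[OF L(1)] by simp
  next
    case False
    define a where "a = h P"
    define b where "b = h Q"
    have ab: "a \<noteq> 0 \<or> b \<noteq> 0" using False unfolding a_def b_def by auto
    define x0 where "x0 = (\<lambda>i. b * P i + (- a) * Q i)"
    have x0d: "x0 \<in> cspan d" unfolding Cd x0_def by (rule span2_I)
    have x0P: "x0 \<in> PL L1 L2" unfolding x0_def inPd a_def b_def by (simp add: algebra_simps)
    have x0F: "cubic_eval F x0 = 0" using onD x0d Cd by simp
    have x0nz: "x0 \<noteq> (\<lambda>i. 0)"
    proof
      assume "x0 = (\<lambda>i. 0)"
      hence "\<forall>i<4. b * P i + (- a) * Q i = 0" unfolding x0_def by metis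
      hence "b = 0 \<and> - a = 0" using iPQ unfolding indep2_def by blast
      thus False using ab by simp
    qed
    have key: False if Li: "Li \<in> {L1, L2, L3}" and x0i: "x0 \<in> cspan Li" for Li
    proof -
      have LiS: "Li \<in> S" using Li Tri by auto
      have "\<not> lines_disjoint Li d" unfolding lines_disjoint_def using x0i x0d x0nz by blast
      moreover have "Li \<noteq> d" using dneq[OF Li] by simp
      ultimately obtain L4 where L4: "L4 \<in> S" "L4 \<noteq> Li" "L4 \<noteq> d" "cspan L4 \<subseteq> PL Li d"
        using triangle[OF sm LiS[unfolded S_def] d(1)[unfolded S_def]] unfolding S_def by blast
      have L4i: "L4 \<in> {L1, L2, L3}" using L4(1,3) S4 by auto
      have "\<not> cspan L4 \<subseteq> cspan Li"
      proof
        assume "cspan L4 \<subseteq> cspan Li"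
        hence "L4 = Li" using cspan_inj[OF qL[OF L4i] qL[OF Li]] by simp
        thus False using L4(2) by simp
      qed
      then obtain y where y: "y \<in> cspan L4" "y \<notin> cspan Li" by blast
      obtain z z' where zz: "y = (\<lambda>i. z i + z' i)" "z \<in> cspan Li" "z' \<in> cspan d"
        using L4(4) y(1) unfolding PL_def by blast
      have hy: "h y = 0" using hP[OF L4i y(1)] .
      have hz: "h z = 0" using hP[OF Li zz(2)] .
      have z'e: "z' = (\<lambda>i. y i - z i)" unfolding zz(1) by simp
      have hz': "h z' = 0" unfolding z'e hdiff hy hz by simp
      obtain s t where st: "z' = (\<lambda>i. s * P i + t * Q i)" using zz(3) unfolding Cd by (rule span2_E)
      have sat: "s * a + t * b = 0" using hz' unfolding st hlin a_def b_def .
      have "z' \<in> cspan Li"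
      proof (cases "a = 0")
        case True
        hence b0: "b \<noteq> 0" using ab by simp
        hence t0: "t = 0" using sat True by simp
        have "z' = (\<lambda>i. (s/b) * x0 i + 0 * x0 i)" unfolding st x0_def using True t0 b0 by (simp add: field_simps)
        thus ?thesis using cspan_closed[OF qL[OF Li] x0i x0i] by metis
      next
        case False
        have ss: "s = - t * b / a" using sat False by (simp add: field_simps add_eq_0_iff)
        have "z' = (\<lambda>i. (- t / a) * x0 i + 0 * x0 i)" unfolding st x0_def ss using False by (simp add: fun_eq_iff field_simps)
        thus ?thesis using cspan_closed[OF qL[OF Li] x0i x0i] by metis
      qed
      hence "(\<lambda>i. 1 * z i + 1 * z' i) \<in> cspan Li" using cspan_closed[OF qL[OF Li] zz(2)] by blast
      hence "y \<in> cspan Li" unfolding zz(1) by simp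
      thus False using y(2) by simp
    qed
    have "x0 \<in> cspan L1 \<or> x0 \<in> cspan L2 \<or> x0 \<in> cspan L3" using sect x0P x0F by blast
    thus False using key by blast
  qed
qed

end
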